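(* (1) $H(1,0)\wedge H(1,0)\cong A(3\mid 0)$; (2) $H(0,1)\wedge H(0,1)\cong A(1\mid0)$; (3) for $m+n\ge2$, $H(m,n)\wedge H(m,n)\cong A(r\mid s)$ with $r=2m^2-m+\frac{n(n+1)}{2}$ and $s=2mn$; (4) $H_1\wedge H_1\cong A(1\mid 2)$; (5) for $m\ge2$, $H_m\wedge H_m\cong A(m^2\mid m^2)$.
   Context: All algebras are over a field $\mathbb{F}$ of characteristic $\neq 2,3$. $A(r\mid s)$ is the abelian Lie superalgebra of dimension $(r\mid s)$. $H(m,n)$ has even basis $x_1,\dots,x_{2m},z$, odd basis $y_1,\dots,y_n$, nonzero brackets $[x_i,x_{m+i}]=z$, $[y_j,y_j]=z$. $H_m$ has even basis $x_1,\dots,x_m$, odd basis $y_1,\dots,y_m,z$, nonzero brackets $[x_j,y_j]=z$. Non-abelian tensor square: $L\otimes L$ is the Lie superalgebra generated by symbols $x\otimes y$ ($x,y$ homogeneous, $|x\otimes y|=|x|+|y|$) subject to bilinearity, $[x,x']\otimes y=x\otimes[x',y]-(-1)^{|x||x'|}x'\otimes[x,y]$, $x\otimes[y,y']=(-1)^{|y'|(|x|+|y|)}[y',x]\otimes y-(-1)^{|x||y|}[y,x]\otimes y'$, and $[x\otimes y,x'\otimes y']=-(-1)^{|x||y|}[y,x]\otimes[x',y']$. The exterior square is $L\wedge L=(L\otimes L)/(L\square L)$, where $L\square L$ is the graded ideal generated by $x\otimes y+(-1)^{|x||y|}y\otimes x$ for homogeneous $x,y$ and by $x_0\otimes x_0$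 for $x_0\in L_{\bar 0}$. *)

theory Defs
  imports Main "HOL-Library.Function_Algebras"
begin

record ('k, 'v) lsa =
  car :: "'v set"
  evp :: "'v set"
  odp :: "'v set"
  scl :: "'k \<Rightarrow> 'v \<Rightarrow> 'v"
  brk :: "'v \<Rightarrow> 'v \<Rightarrow> 'v"

text \<open>Parity is a bool: False = even, True = odd.\<close>
definition part :: "('k, 'v, 'z) lsa_scheme \<Rightarrow> bool \<Rightarrow> 'v set" where
  "part L d = (if d then odp L else evp L)"

definition psign :: "bool \<Rightarrow> 'k::ring_1" where
  "psign p = (if p then -1 else 1)"

definition lsubspace :: "('k, 'v::ab_group_add, 'z) lsa_scheme \<Rightarrow> 'v set \<Rightarrow> bool" where
  "lsubspace L S \<longleftrightarrow> 0 \<in> S \<and> (\<forall>x\<in>S. \<forall>y\<in>S. x + y \<in> S) \<and> (\<forall>c. \<forall>x\<in>S. scl L c x \<in> S)"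

definition lie_superalgebra :: "('k::field, 'v::ab_group_add) lsa \<Rightarrow> bool" where
  "lie_superalgebra L \<longleftrightarrow>
     lsubspace L (car L) \<and> lsubspace L (evp L) \<and> lsubspace L (odp L) \<and>
     evp L \<subseteq> car L \<and> odp L \<subseteq> car L \<and> evp L \<inter> odp L = {0} \<and>
     (\<forall>x\<in>car L. \<exists>u\<in>evp L. \<exists>v\<in>odp L. x = u + v) \<and>
     (\<forall>a. \<forall>x\<in>car L. \<forall>y\<in>car L. scl L a (x + y) = scl L a x + scl L a y) \<and>
     (\<forall>a b. \<forall>x\<in>car L. scl L (a + b) x = scl L a x + scl L b x) \<and>
     (\<forall>a b. \<forall>x\<in>car L. scl L a (scl L b x) = scl L (a * b) x) \<and>
     (\<forall>x\<in>car L. scl L 1 x = x) \<and>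
     (\<forall>x\<in>car L. \<forall>y\<in>car L. brk L x y \<in> car L) \<and>
     (\<forall>x\<in>car L. \<forall>x'\<in>car L. \<forall>y\<in>car L. brk L (x + x') y = brk L x y + brk L x' y) \<and>
     (\<forall>x\<in>car L. \<forall>y\<in>car L. \<forall>y'\<in>car L. brk L x (y + y') = brk L x y + brk L x y') \<and>
     (\<forall>c. \<forall>x\<in>car L. \<forall>y\<in>car L. brk L (scl L c x) y = scl L c (brk L x y)) \<and>
     (\<forall>c. \<forall>x\<in>car L. \<forall>y\<in>car L. brk L x (scl L c y) = scl L c (brk L x y)) \<and>
     (\<forall>a b. \<forall>x\<in>part L a. \<forall>y\<in>part L b. brk L x y \<in> part L (a \<noteq> b)) \<and>
     (\<forall>a b. \<forall>x\<in>part L a. \<forall>y\<in>part L b.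
        brk L x y = - scl L (psign (a \<and> b)) (brk L y x)) \<and>
     (\<forall>a b c. \<forall>x\<in>part L a. \<forall>y\<in>part L b. \<forall>z\<in>part L c.
        scl L (psign (a \<and> c)) (brk L x (brk L y z))
      + scl L (psign (b \<and> a)) (brk L y (brk L z x))
      + scl L (psign (c \<and> b)) (brk L z (brk L x y)) = 0)"

definition lsa_hom :: "('k, 'v::ab_group_add) lsa \<Rightarrow> ('k, 'w::ab_group_add) lsa \<Rightarrow> ('v \<Rightarrow> 'w) \<Rightarrow> bool" where
  "lsa_hom E M \<phi> \<longleftrightarrow>
     (\<forall>x\<in>car E. \<phi> x \<in> car M) \<and>
     (\<forall>x\<in>car E. \<forall>y\<in>car E. \<phi> (x + y) = \<phi> x + \<phi> y) \<and>
     (\<forall>c. \<forall>x\<in>car E. \<phi> (scl E c x) = scl M c (\<phi> x)) \<and>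
     (\<forall>x\<in>car E. \<forall>y\<in>car E. \<phi> (brk E x y) = brk M (\<phi> x) (\<phi> y)) \<and>
     (\<forall>d. \<forall>x\<in>part E d. \<phi> x \<in> part M d)"

text \<open>An "exterior pairing" L x L -> M: a map x,y |-> x \<and> y satisfying all defining relations
  of the non-abelian tensor square L \<otimes> L (bilinearity, parity, the three relations) together with
  the relations generating L \<box> L.\<close>
definition ext_pairing :: "('k::field, 'v::ab_group_add) lsa \<Rightarrow> ('k, 'w::ab_group_add) lsa \<Rightarrow> ('v \<Rightarrow> 'v \<Rightarrow> 'w) \<Rightarrow> bool" where
  "ext_pairing L M f \<longleftrightarrow>
     (\<forall>x\<in>car L. \<forall>y\<in>car L. f x y \<in> car M) \<and>
     (\<forall>x\<in>car L. \<forall>x'\<in>car L. \<forall>y\<in>car L. f (x + x') y = f x y + f x' y) \<and>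
     (\<forall>x\<in>car L. \<forall>y\<in>car L. \<forall>y'\<in>car L. f x (y + y') = f x y + f x y') \<and>
     (\<forall>c. \<forall>x\<in>car L. \<forall>y\<in>car L. f (scl L c x) y = scl M c (f x y)) \<and>
     (\<forall>c. \<forall>x\<in>car L. \<forall>y\<in>car L. f x (scl L c y) = scl M c (f x y)) \<and>
     (\<forall>a b. \<forall>x\<in>part L a. \<forall>y\<in>part L b. f x y \<in> part M (a \<noteq> b)) \<and>
     (\<forall>a b. \<forall>x\<in>part L a. \<forall>x'\<in>part L b. \<forall>y\<in>car L.
        f (brk L x x') y = f x (brk L x' y) - scl M (psign (a \<and> b)) (f x' (brk L x y))) \<and>
     (\<forall>a b c. \<forall>x\<in>part L a. \<forall>y\<in>part L b. \<forall>y'\<in>part L c.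
        f x (brk L y y') = scl M (psign (c \<and> (a \<noteq> b))) (f (brk L y' x) y)
                         - scl M (psign (a \<and> b)) (f (brk L y x) y')) \<and>
     (\<forall>a b. \<forall>x\<in>part L a. \<forall>y\<in>part L b. \<forall>x'\<in>car L. \<forall>y'\<in>car L.
        brk M (f x y) (f x' y') = - scl M (psign (a \<and> b)) (f (brk L y x) (brk L x' y'))) \<and>
     (\<forall>a b. \<forall>x\<in>part L a. \<forall>y\<in>part L b. f x y + scl M (psign (a \<and> b)) (f y x) = 0) \<and>
     (\<forall>x\<in>evp L. f x x = 0)"

text \<open>E (with some pairing w) is the exterior square L \<and> L, i.e. L \<and> L \<cong> E:
  (E, w) is initial among exterior pairings of L into Lie superalgebras (tested on all Lie
  superalgebras whose elements live in the type 'm).\<close>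
definition is_ext_square ::
  "('k::field, 'v::ab_group_add) lsa \<Rightarrow> ('k, 'w::ab_group_add) lsa \<Rightarrow> 'm::ab_group_add itself \<Rightarrow> bool" where
  "is_ext_square L E _ \<longleftrightarrow>
     lie_superalgebra L \<and> lie_superalgebra E \<and>
     (\<exists>w. ext_pairing L E w \<and>
        (\<forall>(M :: ('k, 'm) lsa) f. lie_superalgebra M \<and> ext_pairing L M f \<longrightarrow>
           (\<exists>\<phi>. lsa_hom E M \<phi> \<and> (\<forall>x\<in>car L. \<forall>y\<in>car L. \<phi> (w x y) = f x y) \<and>
              (\<forall>\<psi>. lsa_hom E M \<psi> \<and> (\<forall>x\<in>car L. \<forall>y\<in>car L. \<psi> (w x y) = f x y)
                    \<longrightarrow> (\<forall>e\<in>car E. \<psi> e = \<phi> e)))))"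

datatype idx = X nat | Y nat | Z

definition supp_in :: "idx set \<Rightarrow> (idx \<Rightarrow> 'k::zero) set" where
  "supp_in S = {v. \<forall>i. v i \<noteq> 0 \<longrightarrow> i \<in> S}"

definition cscale :: "'k::times \<Rightarrow> (idx \<Rightarrow> 'k) \<Rightarrow> (idx \<Rightarrow> 'k)" where
  "cscale c v = (\<lambda>i. c * v i)"

definition Aab :: "nat \<Rightarrow> nat \<Rightarrow> ('k::field, idx \<Rightarrow> 'k) lsa" where
  "Aab r s = \<lparr> car = supp_in ({X i | i. 1 \<le> i \<and> i \<le> r} \<union> {Y j | j. 1 \<le> j \<and> j \<le> s}),
              evp = supp_in {X i | i. 1 \<le> i \<and> i \<le> r},
              odp = supp_in {Y j | j. 1 \<le> j \<and> j \<le> s},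
              scl = cscale,
              brk = (\<lambda>u v. 0) \<rparr>"

text \<open>H(m,n): even basis X 1..X (2m) (= x_i) and Z (= z), odd basis Y 1..Y n (= y_j);
  [x_i, x_{m+i}] = z, [y_j, y_j] = z, extended bilinearly.\<close>
definition Hmn :: "nat \<Rightarrow> nat \<Rightarrow> ('k::field, idx \<Rightarrow> 'k) lsa" where
  "Hmn m n = \<lparr> car = supp_in ({X i | i. 1 \<le> i \<and> i \<le> 2 * m} \<union> {Z} \<union> {Y j | j. 1 \<le> j \<and> j \<le> n}),
              evp = supp_in ({X i | i. 1 \<le> i \<and> i \<le> 2 * m} \<union> {Z}),
              odp = supp_in {Y j | j. 1 \<le> j \<and> j \<le> n},
              scl = cscale,
              brk = (\<lambda>u v i. if i = Z then
                        (\<Sum>k=1..m. u (X k) * v (X (m + k)) - u (X (m + k)) * v (X k))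
                      + (\<Sum>j=1..n. u (Y j) * v (Y j))
                      else 0) \<rparr>"

text \<open>H_m: even basis X 1..X m (= x_j), odd basis Y 1..Y m (= y_j) and Z (= z);
  [x_j, y_j] = z (hence [y_j, x_j] = -z), extended bilinearly.\<close>
definition Hm :: "nat \<Rightarrow> ('k::field, idx \<Rightarrow> 'k) lsa" where
  "Hm m = \<lparr> car = supp_in ({X j | j. 1 \<le> j \<and> j \<le> m} \<union> {Y j | j. 1 \<le> j \<and> j \<le> m} \<union> {Z}),
            evp = supp_in {X j | j. 1 \<le> j \<and> j \<le> m},
            odp = supp_in ({Y j | j. 1 \<le> j \<and> j \<le> m} \<union> {Z}),
            scl = cscale,
            brk = (\<lambda>u v i. if i = Z then
                      (\<Sum>j=1..m. u (X j) * v (Y j) - u (Y j) * v (X j))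
                    else 0) \<rparr>"

end

theory Submission
  imports Defs
begin


definition delta :: "idx \<Rightarrow> idx \<Rightarrow> 'k::{zero,one}" where
  "delta b = (\<lambda>i. if i = b then 1 else 0)"

lemma sum_fun_apply: "sum g A i = (\<Sum>a\<in>A. g a i)"
  by (induction A rule: infinite_finite_induct) auto

lemma supp_inD: "v \<in> supp_in S \<Longrightarrow> i \<notin> S \<Longrightarrow> v i = 0"
  by (auto simp: supp_in_def)

lemma supp_inI: "(\<And>i. i \<notin> S \<Longrightarrow> v i = 0) \<Longrightarrow> v \<in> supp_in S"
  by (auto simp: supp_in_def)

lemma delta_supp: "b \<in> S \<Longrightarrow> delta b \<in> supp_in S"
  by (auto simp: supp_in_def delta_def)

lemma supp_in_iff: "v \<in> supp_in S \<longleftrightarrow> (\<forall>i. i \<notin> S \<longrightarrow> v i = 0)"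
  by (auto simp: supp_in_def)

lemma lsubspace_supp: "scl (L::('k::field, idx \<Rightarrow> 'k, 'z) lsa_scheme) = cscale \<Longrightarrow> lsubspace L (supp_in S)"
  by (auto simp: lsubspace_def supp_in_iff cscale_def)

lemma supp_decomp:
  fixes x :: "idx \<Rightarrow> 'k::field"
  assumes "finite S" "x \<in> supp_in S"
  shows "x = (\<Sum>i\<in>S. cscale (x i) (delta i))"
proof
  fix j
  have "(\<Sum>i\<in>S. cscale (x i) (delta i)) j = (\<Sum>i\<in>S. x i * delta i j)"
    by (simp add: sum_fun_apply cscale_def)
  also have "\<dots> = x j"
  proof (cases "j \<in> S")
    case True
    have "(\<Sum>i\<in>S. x i * delta i j) = (\<Sum>i\<in>S. if i = j then x i else 0)"
      by (intro sum.cong) (auto simp: delta_def)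
    then show ?thesis using assms(1) True by simp
  next
    case False
    have "x j = 0" using assms(2) False by (simp add: supp_in_iff)
    moreover have "(\<Sum>i\<in>S. x i * delta i j) = 0"
      using False by (intro sum.neutral) (auto simp: delta_def)
    ultimately show ?thesis by simp
  qed
  finally show "x j = (\<Sum>i\<in>S. cscale (x i) (delta i)) j" by simp
qed

lemma lsubspace_sum:
  assumes "lsubspace L S" "\<And>i. i \<in> A \<Longrightarrow> g i \<in> S"
  shows "sum g A \<in> S"
  using assms(2)
proof (induction A rule: infinite_finite_induct)
  case (infinite A) then show ?case using assms(1) by (simp add: lsubspace_def)
next
  case empty then show ?case using assms(1) by (simp add: lsubspace_def)
next
  case (insert x F) then show ?case using assms(1) by (simp add: lsubspace_def)
qed

lemma ax_scl_add_r: "lie_superalgebra L \<Longrightarrow> \<forall>a. \<forall>x\<in>car L. \<forall>y\<in>car L. scl L a (x + y) = scl L a x + scl L a y"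
  unfolding lie_superalgebra_def by (elim conjE) assumption
lemma ax_scl_add_l: "lie_superalgebra L \<Longrightarrow> \<forall>a b. \<forall>x\<in>car L. scl L (a + b) x = scl L a x + scl L b x"
  unfolding lie_superalgebra_def by (elim conjE) assumption
lemma ax_scl_mult: "lie_superalgebra L \<Longrightarrow> \<forall>a b. \<forall>x\<in>car L. scl L a (scl L b x) = scl L (a * b) x"
  unfolding lie_superalgebra_def by (elim conjE) assumption
lemma ax_scl_one: "lie_superalgebra L \<Longrightarrow> \<forall>x\<in>car L. scl L 1 x = x"
  unfolding lie_superalgebra_def by (elim conjE) assumption
lemma ax_brk_car: "lie_superalgebra L \<Longrightarrow> \<forall>x\<in>car L. \<forall>y\<in>car L. brk L x y \<in> car L"
  unfolding lie_superalgebra_def by (elim conjE) assumption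
lemma ax_brk_add_l: "lie_superalgebra L \<Longrightarrow> \<forall>x\<in>car L. \<forall>x'\<in>car L. \<forall>y\<in>car L. brk L (x + x') y = brk L x y + brk L x' y"
  unfolding lie_superalgebra_def by (elim conjE) assumption
lemma ax_brk_add_r: "lie_superalgebra L \<Longrightarrow> \<forall>x\<in>car L. \<forall>y\<in>car L. \<forall>y'\<in>car L. brk L x (y + y') = brk L x y + brk L x y'"
  unfolding lie_superalgebra_def by (elim conjE) assumption
lemma ax_brk_scl_l: "lie_superalgebra L \<Longrightarrow> \<forall>c. \<forall>x\<in>car L. \<forall>y\<in>car L. brk L (scl L c x) y = scl L c (brk L x y)"
  unfolding lie_superalgebra_def by (elim conjE) assumption
lemma ax_brk_scl_r: "lie_superalgebra L \<Longrightarrow> \<forall>c. \<forall>x\<in>car L. \<forall>y\<in>car L. brk L x (scl L c y) = scl L c (brk L x y)"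
  unfolding lie_superalgebra_def by (elim conjE) assumption
lemma ax_brk_par: "lie_superalgebra L \<Longrightarrow> \<forall>a b. \<forall>x\<in>part L a. \<forall>y\<in>part L b. brk L x y \<in> part L (a \<noteq> b)"
  unfolding lie_superalgebra_def by (elim conjE) assumption
lemma ax_brk_anti: "lie_superalgebra L \<Longrightarrow> \<forall>a b. \<forall>x\<in>part L a. \<forall>y\<in>part L b. brk L x y = - scl L (psign (a \<and> b)) (brk L y x)"
  unfolding lie_superalgebra_def by (elim conjE) assumption
lemma ax_inter0: "lie_superalgebra L \<Longrightarrow> evp L \<inter> odp L = {0}"
  unfolding lie_superalgebra_def by (elim conjE) assumption


context
  fixes M :: "('k::field, 'm::ab_group_add) lsa"
  assumes M: "lie_superalgebra M"
begin

lemma M_sub: "lsubspace M (car M)" using M unfolding lie_superalgebra_def by (elim conjE) assumption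
lemma M_sub_ev: "lsubspace M (evp M)" using M unfolding lie_superalgebra_def by (elim conjE) assumption
lemma M_sub_od: "lsubspace M (odp M)" using M unfolding lie_superalgebra_def by (elim conjE) assumption
lemma M_zero: "0 \<in> car M" using M_sub unfolding lsubspace_def by blast
lemma M_add: "x \<in> car M \<Longrightarrow> y \<in> car M \<Longrightarrow> x + y \<in> car M" using M_sub unfolding lsubspace_def by blast
lemma M_scl: "x \<in> car M \<Longrightarrow> scl M c x \<in> car M" using M_sub unfolding lsubspace_def by blast
lemma M_scl_add_r: "x \<in> car M \<Longrightarrow> y \<in> car M \<Longrightarrow> scl M a (x + y) = scl M a x + scl M a y"
  using ax_scl_add_r[OF M] by blast
lemma M_scl_add_l: "x \<in> car M \<Longrightarrow> scl M (a + b) x = scl M a x + scl M b x"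
  using ax_scl_add_l[OF M] by blast
lemma M_scl_mult: "x \<in> car M \<Longrightarrow> scl M a (scl M b x) = scl M (a * b) x"
  using ax_scl_mult[OF M] by blast
lemma M_scl_one: "x \<in> car M \<Longrightarrow> scl M 1 x = x"
  using ax_scl_one[OF M] by blast
lemma M_scl_zero_l: "x \<in> car M \<Longrightarrow> scl M 0 x = 0"
  using M_scl_add_l[of x 0 0] by simp
lemma M_scl_zero_r: "scl M c 0 = 0"
  using M_scl_add_r[OF M_zero M_zero, of c] by simp
lemma M_scl_neg: "x \<in> car M \<Longrightarrow> scl M (- c) x = - scl M c x"
  using M_scl_add_l[of x c "-c"] M_scl_zero_l[of x] minus_unique by fastforce
lemma M_sum_car: "(\<And>i. i \<in> A \<Longrightarrow> g i \<in> car M) \<Longrightarrow> sum g A \<in> car M"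
  using lsubspace_sum[OF M_sub] .
lemma M_scl_sum_r: "(\<And>i. i \<in> A \<Longrightarrow> g i \<in> car M) \<Longrightarrow> scl M c (sum g A) = (\<Sum>i\<in>A. scl M c (g i))"
proof (induction A rule: infinite_finite_induct)
  case (infinite A)
  have "sum g A = 0" "(\<Sum>i\<in>A. scl M c (g i)) = 0" using infinite(1) by (rule sum.infinite)+
  then show ?case using M_scl_zero_r by (simp only:)
next
  case empty then show ?case using M_scl_zero_r by (simp only: sum.empty)
next
  case (insert x F)
  have s: "sum g F \<in> car M" by (rule M_sum_car) (use insert in auto)
  have gx: "g x \<in> car M" using insert by auto
  have "scl M c (sum g (insert x F)) = scl M c (g x + sum g F)" by (simp only: sum.insert[OF insert(1,2)])
  also have "\<dots> = scl M c (g x) + scl M c (sum g F)" by (rule M_scl_add_r[OF gx s])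
  also have "\<dots> = scl M c (g x) + (\<Sum>i\<in>F. scl M c (g i))" using insert.IH insert.prems by simp
  also have "\<dots> = (\<Sum>i\<in>insert x F. scl M c (g i))" by (simp only: sum.insert[OF insert(1,2)])
  finally show ?case .
qed
lemma M_scl_sum_l: "x \<in> car M \<Longrightarrow> scl M (sum h A) x = (\<Sum>i\<in>A. scl M (h i) x)"
proof (induction A rule: infinite_finite_induct)
  case (infinite A)
  have "sum h A = 0" "(\<Sum>i\<in>A. scl M (h i) x) = 0" using infinite(1) by (rule sum.infinite)+
  then show ?case using M_scl_zero_l[OF infinite(2)] by (simp only:)
next
  case empty then show ?case using M_scl_zero_l by (simp only: sum.empty)
next
  case (insert y F)
  have "scl M (sum h (insert y F)) x = scl M (h y + sum h F) x" by (simp only: sum.insert[OF insert(1,2)])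
  also have "\<dots> = scl M (h y) x + scl M (sum h F) x" by (rule M_scl_add_l[OF insert.prems])
  also have "\<dots> = scl M (h y) x + (\<Sum>i\<in>F. scl M (h i) x)" using insert.IH insert.prems by simp
  also have "\<dots> = (\<Sum>i\<in>insert y F. scl M (h i) x)" by (simp only: sum.insert[OF insert(1,2)])
  finally show ?case .
qed
lemma M_brk_add_l: "x \<in> car M \<Longrightarrow> x' \<in> car M \<Longrightarrow> y \<in> car M \<Longrightarrow> brk M (x + x') y = brk M x y + brk M x' y"
  using ax_brk_add_l[OF M] by blast
lemma M_brk_add_r: "x \<in> car M \<Longrightarrow> y \<in> car M \<Longrightarrow> y' \<in> car M \<Longrightarrow> brk M x (y + y') = brk M x y + brk M x y'"
  using ax_brk_add_r[OF M] by blast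
lemma M_brk_scl_l: "x \<in> car M \<Longrightarrow> y \<in> car M \<Longrightarrow> brk M (scl M c x) y = scl M c (brk M x y)"
  using ax_brk_scl_l[OF M] by blast
lemma M_brk_scl_r: "x \<in> car M \<Longrightarrow> y \<in> car M \<Longrightarrow> brk M x (scl M c y) = scl M c (brk M x y)"
  using ax_brk_scl_r[OF M] by blast
lemma M_brk_zero_l: "y \<in> car M \<Longrightarrow> brk M 0 y = 0"
  using M_brk_add_l[OF M_zero M_zero, of y] by simp
lemma M_brk_zero_r: "x \<in> car M \<Longrightarrow> brk M x 0 = 0"
  using M_brk_add_r[OF _ M_zero M_zero, of x] by simp
lemma M_brk_sum_l: "(\<And>i. i \<in> A \<Longrightarrow> g i \<in> car M) \<Longrightarrow> y \<in> car M \<Longrightarrow> brk M (sum g A) y = (\<Sum>i\<in>A. brk M (g i) y)"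
proof (induction A rule: infinite_finite_induct)
  case (infinite A)
  have "sum g A = 0" "(\<Sum>i\<in>A. brk M (g i) y) = 0" using infinite(1) by (rule sum.infinite)+
  then show ?case using M_brk_zero_l[OF infinite(3)] by (simp only:)
next
  case empty then show ?case using M_brk_zero_l by (simp only: sum.empty)
next
  case (insert x F)
  have s: "sum g F \<in> car M" by (rule M_sum_car) (use insert in auto)
  have gx: "g x \<in> car M" using insert by auto
  have "brk M (sum g (insert x F)) y = brk M (g x + sum g F) y" by (simp only: sum.insert[OF insert(1,2)])
  also have "\<dots> = brk M (g x) y + brk M (sum g F) y" by (rule M_brk_add_l[OF gx s insert.prems(2)])
  also have "\<dots> = brk M (g x) y + (\<Sum>i\<in>F. brk M (g i) y)" using insert.IH insert.prems by simp
  also have "\<dots> = (\<Sum>i\<in>insert x F. brk M (g i) y)" by (simp only: sum.insert[OF insert(1,2)])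
  finally show ?case .
qed
lemma M_brk_sum_r: "(\<And>i. i \<in> A \<Longrightarrow> g i \<in> car M) \<Longrightarrow> x \<in> car M \<Longrightarrow> brk M x (sum g A) = (\<Sum>i\<in>A. brk M x (g i))"
proof (induction A rule: infinite_finite_induct)
  case (infinite A)
  have "sum g A = 0" "(\<Sum>i\<in>A. brk M x (g i)) = 0" using infinite(1) by (rule sum.infinite)+
  then show ?case using M_brk_zero_r[OF infinite(3)] by (simp only:)
next
  case empty then show ?case using M_brk_zero_r by (simp only: sum.empty)
next
  case (insert y F)
  have s: "sum g F \<in> car M" by (rule M_sum_car) (use insert in auto)
  have gx: "g y \<in> car M" using insert by auto
  have "brk M x (sum g (insert y F)) = brk M x (g y + sum g F)" by (simp only: sum.insert[OF insert(1,2)])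
  also have "\<dots> = brk M x (g y) + brk M x (sum g F)" by (rule M_brk_add_r[OF insert.prems(2) gx s])
  also have "\<dots> = brk M x (g y) + (\<Sum>i\<in>F. brk M x (g i))" using insert.IH insert.prems by simp
  also have "\<dots> = (\<Sum>i\<in>insert y F. brk M x (g i))" by (simp only: sum.insert[OF insert(1,2)])
  finally show ?case .
qed
lemma M_brk_car: "x \<in> car M \<Longrightarrow> y \<in> car M \<Longrightarrow> brk M x y \<in> car M"
  using ax_brk_car[OF M] by blast
lemma M_part_sub: "lsubspace M (part M d)"
  using M_sub_ev M_sub_od by (simp add: part_def)
lemma M_ev_car: "evp M \<subseteq> car M" using M unfolding lie_superalgebra_def by (elim conjE) assumption
lemma M_od_car: "odp M \<subseteq> car M" using M unfolding lie_superalgebra_def by (elim conjE) assumption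
lemma M_part_car: "part M d \<subseteq> car M"
  using M_ev_car M_od_car by (simp add: part_def)

end

definition bil :: "('k::field, 'v::ab_group_add) lsa \<Rightarrow> ('k, 'w::ab_group_add) lsa \<Rightarrow> ('v \<Rightarrow> 'v \<Rightarrow> 'w) \<Rightarrow> bool" where
  "bil L M f \<longleftrightarrow>
     (\<forall>x\<in>car L. \<forall>y\<in>car L. f x y \<in> car M) \<and>
     (\<forall>x\<in>car L. \<forall>x'\<in>car L. \<forall>y\<in>car L. f (x + x') y = f x y + f x' y) \<and>
     (\<forall>x\<in>car L. \<forall>y\<in>car L. \<forall>y'\<in>car L. f x (y + y') = f x y + f x y') \<and>
     (\<forall>c. \<forall>x\<in>car L. \<forall>y\<in>car L. f (scl L c x) y = scl M c (f x y)) \<and>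
     (\<forall>c. \<forall>x\<in>car L. \<forall>y\<in>car L. f x (scl L c y) = scl M c (f x y))"

lemma bil_car: "bil L M f \<Longrightarrow> x \<in> car L \<Longrightarrow> y \<in> car L \<Longrightarrow> f x y \<in> car M"
  unfolding bil_def by (elim conjE) blast
lemma bil_add_l: "bil L M f \<Longrightarrow> x \<in> car L \<Longrightarrow> x' \<in> car L \<Longrightarrow> y \<in> car L \<Longrightarrow> f (x + x') y = f x y + f x' y"
  unfolding bil_def by (elim conjE) blast
lemma bil_add_r: "bil L M f \<Longrightarrow> x \<in> car L \<Longrightarrow> y \<in> car L \<Longrightarrow> y' \<in> car L \<Longrightarrow> f x (y + y') = f x y + f x y'"
  unfolding bil_def by (elim conjE) blast
lemma bil_scl_l: "bil L M f \<Longrightarrow> x \<in> car L \<Longrightarrow> y \<in> car L \<Longrightarrow> f (scl L c x) y = scl M c (f x y)"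
  unfolding bil_def by (elim conjE) blast
lemma bil_scl_r: "bil L M f \<Longrightarrow> x \<in> car L \<Longrightarrow> y \<in> car L \<Longrightarrow> f x (scl L c y) = scl M c (f x y)"
  unfolding bil_def by (elim conjE) blast

lemma ext_bil: "ext_pairing L M f \<Longrightarrow> bil L M f"
  unfolding ext_pairing_def bil_def by (elim conjE) (intro conjI; assumption)

context
  fixes L :: "('k::field, idx \<Rightarrow> 'k) lsa" and M :: "('k, 'm::ab_group_add) lsa" and f
  assumes M: "lie_superalgebra M" and B: "bil L M f" and Lsub: "lsubspace L (car L)"
begin

lemma B_car: "x \<in> car L \<Longrightarrow> y \<in> car L \<Longrightarrow> f x y \<in> car M" using B by (rule bil_car)

lemma B_zero_l: "y \<in> car L \<Longrightarrow> f 0 y = 0"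
proof -
  assume y: "y \<in> car L"
  have z: "0 \<in> car L" using Lsub by (simp add: lsubspace_def)
  have "f (0 + 0) y = f 0 y + f 0 y" using bil_add_l[OF B z z y] .
  then show ?thesis by (metis add_cancel_right_right add.right_neutral)
qed

lemma B_zero_r: "x \<in> car L \<Longrightarrow> f x 0 = 0"
proof -
  assume y: "x \<in> car L"
  have z: "0 \<in> car L" using Lsub by (simp add: lsubspace_def)
  have "f x (0 + 0) = f x 0 + f x 0" using bil_add_r[OF B y z z] .
  then show ?thesis by (metis add_cancel_right_right add.right_neutral)
qed

lemma B_sum_l: "finite A \<Longrightarrow> (\<And>i. i \<in> A \<Longrightarrow> g i \<in> car L) \<Longrightarrow> y \<in> car L \<Longrightarrow> f (sum g A) y = (\<Sum>i\<in>A. f (g i) y)"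
proof (induction A rule: finite_induct)
  case empty then show ?case using B_zero_l by (metis sum.empty)
next
  case (insert x F)
  have s: "sum g F \<in> car L" by (rule lsubspace_sum[OF Lsub]) (use insert in auto)
  have "f (sum g (insert x F)) y = f (g x + sum g F) y" using insert by (simp only: sum.insert[OF insert(1,2)])
  also have "\<dots> = f (g x) y + f (sum g F) y" using bil_add_l[OF B _ s] insert by simp
  also have "\<dots> = f (g x) y + (\<Sum>i\<in>F. f (g i) y)" using insert.IH insert.prems by simp
  also have "\<dots> = (\<Sum>i\<in>insert x F. f (g i) y)" by (simp only: sum.insert[OF insert(1,2)])
  finally show ?case .
qed

lemma B_sum_r: "finite A \<Longrightarrow> (\<And>i. i \<in> A \<Longrightarrow> g i \<in> car L) \<Longrightarrow> x \<in> car L \<Longrightarrow> f x (sum g A) = (\<Sum>i\<in>A. f x (g i))"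
proof (induction A rule: finite_induct)
  case empty then show ?case using B_zero_r by (metis sum.empty)
next
  case (insert y F)
  have s: "sum g F \<in> car L" by (rule lsubspace_sum[OF Lsub]) (use insert in auto)
  have "f x (sum g (insert y F)) = f x (g y + sum g F)" using insert by (simp only: sum.insert[OF insert(1,2)])
  also have "\<dots> = f x (g y) + f x (sum g F)" using bil_add_r[OF B _ _ s] insert by simp
  also have "\<dots> = f x (g y) + (\<Sum>i\<in>F. f x (g i))" using insert.IH insert.prems by simp
  also have "\<dots> = (\<Sum>i\<in>insert y F. f x (g i))" by (simp only: sum.insert[OF insert(1,2)])
  finally show ?case .
qed

lemma B_expand:
  assumes S: "car L = supp_in S" "finite S" and sc: "scl L = cscale"
    and x: "x \<in> car L" and y: "y \<in> car L"
  shows "f x y = (\<Sum>i\<in>S. \<Sum>j\<in>S. scl M (x i * y j) (f (delta i) (delta j)))"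
proof -
  have d: "\<And>i. i \<in> S \<Longrightarrow> delta i \<in> car L" using S by (simp add: delta_supp)
  have cd: "\<And>i c. i \<in> S \<Longrightarrow> cscale c (delta i) \<in> car L"
    using d Lsub sc by (metis lsubspace_def)
  have ff: "\<And>i j. i \<in> S \<Longrightarrow> j \<in> S \<Longrightarrow> f (delta i) (delta j) \<in> car M" using d B_car by simp
  have "f x y = f (\<Sum>i\<in>S. cscale (x i) (delta i)) (\<Sum>j\<in>S. cscale (y j) (delta j))"
    using supp_decomp[OF S(2)] x y S(1) by metis
  also have "\<dots> = (\<Sum>i\<in>S. f (cscale (x i) (delta i)) (\<Sum>j\<in>S. cscale (y j) (delta j)))"
    using cd lsubspace_sum[OF Lsub, of S "\<lambda>j. cscale (y j) (delta j)"] by (intro B_sum_l S(2)) auto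
  also have "\<dots> = (\<Sum>i\<in>S. \<Sum>j\<in>S. f (cscale (x i) (delta i)) (cscale (y j) (delta j)))"
    using cd by (intro sum.cong refl B_sum_r S(2)) auto
  also have "\<dots> = (\<Sum>i\<in>S. \<Sum>j\<in>S. scl M (x i * y j) (f (delta i) (delta j)))"
  proof (intro sum.cong refl)
    fix i j assume ij: "i \<in> S" "j \<in> S"
    have "f (cscale (x i) (delta i)) (cscale (y j) (delta j)) = scl M (x i) (scl M (y j) (f (delta i) (delta j)))"
    proof -
      have "f (cscale (x i) (delta i)) (cscale (y j) (delta j)) = scl M (x i) (f (delta i) (cscale (y j) (delta j)))"
        using bil_scl_l[OF B d[OF ij(1)] cd[OF ij(2)]] sc by simp
      also have "\<dots> = scl M (x i) (scl M (y j) (f (delta i) (delta j)))"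
        using bil_scl_r[OF B d[OF ij(1)] d[OF ij(2)]] sc by simp
      finally show ?thesis .
    qed
    also have "\<dots> = scl M (x i * y j) (f (delta i) (delta j))"
      using M_scl_mult[OF M ff[OF ij]] by simp
    finally show "f (cscale (x i) (delta i)) (cscale (y j) (delta j)) = scl M (x i * y j) (f (delta i) (delta j))" .
  qed
  finally show ?thesis .
qed

end

lemma bil_agree:
  assumes M: "lie_superalgebra M" and B1: "bil L M f" and B2: "bil L M g" and Lsub: "lsubspace L (car L)"
    and S: "car L = supp_in S" "finite S" and sc: "scl L = cscale"
    and ag: "\<And>i j. i \<in> S \<Longrightarrow> j \<in> S \<Longrightarrow> f (delta i) (delta j) = g (delta i) (delta j)"
    and x: "x \<in> car L" and y: "y \<in> car L"
  shows "f x y = g x y"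
  unfolding B_expand[OF M B1 Lsub S sc x y] B_expand[OF M B2 Lsub S sc x y]
  by (intro sum.cong refl) (simp add: ag)


definition BX :: "nat \<Rightarrow> idx set" where "BX r = {X i | i. 1 \<le> i \<and> i \<le> r}"
definition BY :: "nat \<Rightarrow> idx set" where "BY s = {Y j | j. 1 \<le> j \<and> j \<le> s}"

lemma BX_eq: "BX r = X ` {1..r}" by (auto simp: BX_def)
lemma BY_eq: "BY s = Y ` {1..s}" by (auto simp: BY_def)
lemma finite_B: "finite (BX r \<union> BY s)" by (simp add: BX_eq BY_eq)
lemma BX_BY_disj: "BX r \<inter> BY s = {}" by (auto simp: BX_def BY_def)
lemma X_in_BX[simp]: "X i \<in> BX r \<longleftrightarrow> 1 \<le> i \<and> i \<le> r" by (auto simp: BX_def)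
lemma Y_in_BY[simp]: "Y i \<in> BY r \<longleftrightarrow> 1 \<le> i \<and> i \<le> r" by (auto simp: BY_def)
lemma X_notin_BY[simp]: "X i \<notin> BY r" by (auto simp: BY_def)
lemma Y_notin_BX[simp]: "Y i \<notin> BX r" by (auto simp: BX_def)
lemma Z_notin_BX[simp]: "Z \<notin> BX r" by (auto simp: BX_def)
lemma Z_notin_BY[simp]: "Z \<notin> BY r" by (auto simp: BY_def)

lemma Aab_car: "car (Aab r s) = supp_in (BX r \<union> BY s)" by (simp add: Aab_def BX_def BY_def)
lemma Aab_evp: "evp (Aab r s) = supp_in (BX r)" by (simp add: Aab_def BX_def)
lemma Aab_odp: "odp (Aab r s) = supp_in (BY s)" by (simp add: Aab_def BY_def)
lemma Aab_scl: "scl (Aab r s) = cscale" by (simp add: Aab_def)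
lemma Aab_brk: "brk (Aab r s) = (\<lambda>u v. 0)" by (simp add: Aab_def)

lemma supp_in_mono: "A \<subseteq> B \<Longrightarrow> supp_in A \<subseteq> supp_in B" by (auto simp: supp_in_def)

lemma supp_in_inter0: "A \<inter> B = {} \<Longrightarrow> supp_in A \<inter> (supp_in B :: (idx \<Rightarrow> 'k::field) set) = {0}"
  by (auto simp: supp_in_def fun_eq_iff; meson disjoint_iff)

lemma supp_in_decomp2:
  fixes x :: "idx \<Rightarrow> 'k::field"
  assumes "A \<inter> B = {}" "x \<in> supp_in (A \<union> B)"
  shows "\<exists>u\<in>supp_in A. \<exists>v\<in>supp_in B. x = u + v"
proof (intro bexI)
  show "x = (\<lambda>i. if i \<in> A then x i else 0) + (\<lambda>i. if i \<in> B then x i else 0)"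
    using assms by (auto simp: supp_in_def fun_eq_iff)
qed (auto simp: supp_in_def)

lemma cscale_facts:
  "cscale a (x + y) = cscale a x + cscale a y"
  "cscale (a + b) x = cscale a x + cscale b x"
  "cscale a (cscale b x) = cscale (a * b) x"
  "cscale 1 x = x"
  "cscale a 0 = 0"
  for x y :: "idx \<Rightarrow> 'k::field"
  by (auto simp: cscale_def fun_eq_iff algebra_simps)

lemma Aab_lsa: "lie_superalgebra (Aab r s :: ('k::field, idx \<Rightarrow> 'k) lsa)"
proof -
  let ?A = "Aab r s :: ('k::field, idx \<Rightarrow> 'k) lsa"
  have s1: "lsubspace ?A (supp_in S)" for S by (rule lsubspace_supp) (simp add: Aab_scl)
  have i0: "supp_in (BX r) \<inter> supp_in (BY s) = ({0}::(idx\<Rightarrow>'k) set)"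
    by (rule supp_in_inter0[OF BX_BY_disj])
  have dec: "\<forall>x\<in>supp_in (BX r \<union> BY s). \<exists>u\<in>supp_in (BX r). \<exists>v\<in>supp_in (BY s). x = (u::idx\<Rightarrow>'k) + v"
    using supp_in_decomp2[OF BX_BY_disj] by blast
  have z: "(0::idx\<Rightarrow>'k) \<in> supp_in S" for S by (simp add: supp_in_def)
  have sc: "scl ?A = cscale" by (simp add: Aab_scl)
  show ?thesis
    unfolding lie_superalgebra_def
    apply (intro conjI)
    apply (simp_all only: s1 Aab_car Aab_evp Aab_odp sc Aab_brk)
    using supp_in_mono[of "BX r" "BX r \<union> BY s"] supp_in_mono[of "BY s" "BX r \<union> BY s"]
    apply (simp_all add: i0 dec z cscale_facts part_def Aab_evp Aab_odp)
    done
qed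


lemma psign_ne0: "psign p \<noteq> (0::'k::field)" by (simp add: psign_def)

lemma hom_zero:
  assumes "lsa_hom E M \<psi>" "lsubspace E (car E)"
  shows "\<psi> 0 = 0"
proof -
  have z: "0 \<in> car E" using assms(2) by (simp add: lsubspace_def)
  have "\<psi> (0 + 0) = \<psi> 0 + \<psi> 0" using assms(1) z unfolding lsa_hom_def by blast
  then show ?thesis by (metis add_cancel_right_right add.right_neutral)
qed

lemma hom_sum:
  assumes H: "lsa_hom E M \<psi>" and Es: "lsubspace E (car E)"
  shows "finite A \<Longrightarrow> (\<And>i. i \<in> A \<Longrightarrow> g i \<in> car E) \<Longrightarrow> \<psi> (sum g A) = (\<Sum>i\<in>A. \<psi> (g i))"
proof (induction A rule: finite_induct)
  case empty then show ?case using hom_zero[OF H Es] by (metis sum.empty)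
next
  case (insert x F)
  have s: "sum g F \<in> car E" by (rule lsubspace_sum[OF Es]) (use insert in auto)
  have "\<psi> (sum g (insert x F)) = \<psi> (g x + sum g F)" by (simp only: sum.insert[OF insert(1,2)])
  also have "\<dots> = \<psi> (g x) + \<psi> (sum g F)" using H s insert unfolding lsa_hom_def by blast
  also have "\<dots> = \<psi> (g x) + (\<Sum>i\<in>F. \<psi> (g i))" using insert.IH insert.prems by simp
  also have "\<dots> = (\<Sum>i\<in>insert x F. \<psi> (g i))" by (simp only: sum.insert[OF insert(1,2)])
  finally show ?case .
qed

lemma ep_car: "ext_pairing L M f \<Longrightarrow> x \<in> car L \<Longrightarrow> y \<in> car L \<Longrightarrow> f x y \<in> car M"
  unfolding ext_pairing_def by (elim conjE) blast
lemma ep_add_l: "ext_pairing L M f \<Longrightarrow> x \<in> car L \<Longrightarrow> x' \<in> car L \<Longrightarrow> y \<in> car L \<Longrightarrow> f (x + x') y = f x y + f x' y"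
  unfolding ext_pairing_def by (elim conjE) blast
lemma ep_add_r: "ext_pairing L M f \<Longrightarrow> x \<in> car L \<Longrightarrow> y \<in> car L \<Longrightarrow> y' \<in> car L \<Longrightarrow> f x (y + y') = f x y + f x y'"
  unfolding ext_pairing_def by (elim conjE) blast
lemma ep_scl_l: "ext_pairing L M f \<Longrightarrow> x \<in> car L \<Longrightarrow> y \<in> car L \<Longrightarrow> f (scl L c x) y = scl M c (f x y)"
  unfolding ext_pairing_def by (elim conjE) blast
lemma ep_scl_r: "ext_pairing L M f \<Longrightarrow> x \<in> car L \<Longrightarrow> y \<in> car L \<Longrightarrow> f x (scl L c y) = scl M c (f x y)"
  unfolding ext_pairing_def by (elim conjE) blast
lemma ep_par: "ext_pairing L M f \<Longrightarrow> x \<in> part L a \<Longrightarrow> y \<in> part L b \<Longrightarrow> f x y \<in> part M (a \<noteq> b)"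
  unfolding ext_pairing_def by (elim conjE) metis
lemma ep_rel7: "ext_pairing L M f \<Longrightarrow> x \<in> part L a \<Longrightarrow> x' \<in> part L b \<Longrightarrow> y \<in> car L \<Longrightarrow>
    f (brk L x x') y = f x (brk L x' y) - scl M (psign (a \<and> b)) (f x' (brk L x y))"
  unfolding ext_pairing_def by (elim conjE) metis
lemma ep_rel8: "ext_pairing L M f \<Longrightarrow> x \<in> part L a \<Longrightarrow> y \<in> part L b \<Longrightarrow> y' \<in> part L c \<Longrightarrow>
    f x (brk L y y') = scl M (psign (c \<and> (a \<noteq> b))) (f (brk L y' x) y) - scl M (psign (a \<and> b)) (f (brk L y x) y')"
  unfolding ext_pairing_def by (elim conjE) metis
lemma ep_brk: "ext_pairing L M f \<Longrightarrow> x \<in> part L a \<Longrightarrow> y \<in> part L b \<Longrightarrow> x' \<in> car L \<Longrightarrow> y' \<in> car L \<Longrightarrow>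
    brk M (f x y) (f x' y') = - scl M (psign (a \<and> b)) (f (brk L y x) (brk L x' y'))"
  unfolding ext_pairing_def by (elim conjE) metis
lemma ep_anti: "ext_pairing L M f \<Longrightarrow> x \<in> part L a \<Longrightarrow> y \<in> part L b \<Longrightarrow> f x y + scl M (psign (a \<and> b)) (f y x) = 0"
  unfolding ext_pairing_def by (elim conjE) metis
lemma ep_diag: "ext_pairing L M f \<Longrightarrow> x \<in> evp L \<Longrightarrow> f x x = 0"
  unfolding ext_pairing_def by (elim conjE) metis

lemma lsa_part_car: "lie_superalgebra L \<Longrightarrow> part L d \<subseteq> car L" by (rule M_part_car)

lemma delta_self: "delta b b = 1" by (simp add: delta_def)

lemma univ_A:
  fixes L :: "('k::field, idx \<Rightarrow> 'k) lsa" and w :: "(idx \<Rightarrow> 'k) \<Rightarrow> (idx \<Rightarrow> 'k) \<Rightarrow> idx \<Rightarrow> 'k"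
    and p q :: "idx \<Rightarrow> idx \<Rightarrow> 'k"
  assumes L: "lie_superalgebra L"
    and W: "ext_pairing L (Aab r s) w"
    and hp: "\<And>b. b \<in> BX r \<union> BY s \<Longrightarrow> \<exists>a. p b \<in> part L a"
    and hq: "\<And>b. b \<in> BX r \<union> BY s \<Longrightarrow> \<exists>a. q b \<in> part L a"
    and pq: "\<And>b. b \<in> BX r \<union> BY s \<Longrightarrow> w (p b) (q b) = delta b"
    and gen: "\<And>(M::('k,'m::ab_group_add) lsa) f x y. lie_superalgebra M \<Longrightarrow> ext_pairing L M f \<Longrightarrow>
        x \<in> car L \<Longrightarrow> y \<in> car L \<Longrightarrow> f x y = (\<Sum>b\<in>BX r \<union> BY s. scl M (w x y b) (f (p b) (q b)))"
  shows "is_ext_square L (Aab r s) TYPE('m)"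
proof -
  note Aab_lsa = Aab_lsa
  let ?E = "Aab r s :: ('k, idx \<Rightarrow> 'k) lsa"
  let ?B = "BX r \<union> BY s"
  have finB: "finite ?B" by (rule finite_B)
  have E: "lie_superalgebra ?E" by (rule Aab_lsa)
  have Es: "lsubspace ?E (car ?E)" by (rule M_sub[OF E])
  have Ls: "lsubspace L (car L)" by (rule M_sub[OF L])
  have pc: "\<And>b. b \<in> ?B \<Longrightarrow> p b \<in> car L" using hp lsa_part_car[OF L] by blast
  have qc: "\<And>b. b \<in> ?B \<Longrightarrow> q b \<in> car L" using hq lsa_part_car[OF L] by blast
  have main: "\<exists>\<phi>. lsa_hom ?E M \<phi> \<and> (\<forall>x\<in>car L. \<forall>y\<in>car L. \<phi> (w x y) = f x y) \<and>
              (\<forall>\<psi>. lsa_hom ?E M \<psi> \<and> (\<forall>x\<in>car L. \<forall>y\<in>car L. \<psi> (w x y) = f x y)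
                    \<longrightarrow> (\<forall>e\<in>car ?E. \<psi> e = \<phi> e))"
    if M: "lie_superalgebra M" and f: "ext_pairing L M f" for M :: "('k, 'm) lsa" and f
  proof -
    define F where "F b = f (p b) (q b)" for b
    define \<phi> where "\<phi> e = (\<Sum>b\<in>?B. scl M (e b) (F b))" for e :: "idx \<Rightarrow> 'k"
    have Fc: "\<And>b. b \<in> ?B \<Longrightarrow> F b \<in> car M"
      using ep_car[OF f] pc qc unfolding F_def by blast
    have Fpar: "F b \<in> part M d" if b: "b \<in> ?B" and db: "delta b \<in> part ?E d" for b d
    proof -
      obtain a1 a2 where a1: "p b \<in> part L a1" and a2: "q b \<in> part L a2" using hp hq b by blast
      have "F b \<in> part M (a1 \<noteq> a2)" using ep_par[OF f a1 a2] unfolding F_def by blast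
      moreover have "delta b \<in> part ?E (a1 \<noteq> a2)" using ep_par[OF W a1 a2] pq[OF b] by metis
      moreover have "d = (a1 \<noteq> a2)"
      proof (rule ccontr)
        assume "d \<noteq> (a1 \<noteq> a2)"
        then have "delta b \<in> evp ?E \<inter> odp ?E" using db calculation(2) by (auto simp: part_def split: if_splits)
        then have "delta b = (0 :: idx \<Rightarrow> 'k)"
          using supp_in_inter0[OF BX_BY_disj, of r s, where 'k='k] by (auto simp: Aab_evp Aab_odp)
        then show False using delta_self[of b] by (metis zero_fun_apply zero_neq_one)
      qed
      ultimately show ?thesis by simp
    qed
    have brk0: "brk M (F b) (F c) = 0" if b: "b \<in> ?B" and c: "c \<in> ?B" for b c
    proof -
      obtain a1 a2 where a1: "p b \<in> part L a1" and a2: "q b \<in> part L a2" using hp hq b by blast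
      let ?u = "brk L (q b) (p b)" and ?v = "brk L (p c) (q c)"
      have uc: "?u \<in> car L" and vc: "?v \<in> car L"
        using M_brk_car[OF L] pc qc b c by blast+
      have e1: "brk M (F b) (F c) = - scl M (psign (a1 \<and> a2)) (f ?u ?v)"
        using ep_brk[OF f a1 a2 pc[OF c] qc[OF c]] unfolding F_def by blast
      have "brk ?E (w (p b) (q b)) (w (p c) (q c)) = - scl ?E (psign (a1 \<and> a2)) (w ?u ?v)"
        using ep_brk[OF W a1 a2 pc[OF c] qc[OF c]] by blast
      then have "\<forall>k. psign (a1 \<and> a2) * w ?u ?v k = 0"
        by (simp add: Aab_brk Aab_scl cscale_def fun_eq_iff)
      then have wz: "\<forall>k. w ?u ?v k = 0" using psign_ne0 by auto
      have "f ?u ?v = (\<Sum>k\<in>?B. scl M (w ?u ?v k) (F k))" using gen[OF M f uc vc] by (simp add: F_def)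
      also have "\<dots> = 0" using wz Fc M_scl_zero_l[OF M] by (intro sum.neutral) auto
      finally show ?thesis using e1 M_scl_zero_r[OF M] by simp
    qed
    have phic: "\<phi> e \<in> car M" for e
      unfolding \<phi>_def using Fc by (intro M_sum_car[OF M] M_scl[OF M]) auto
    have hom: "lsa_hom ?E M \<phi>"
      unfolding lsa_hom_def
    proof (intro conjI ballI allI)
      show "\<phi> x \<in> car M" for x by (rule phic)
      show "\<phi> (x + y) = \<phi> x + \<phi> y" for x y
        unfolding \<phi>_def using Fc by (simp add: M_scl_add_l[OF M] sum.distrib)
      show "\<phi> (scl ?E c x) = scl M c (\<phi> x)" for c x
      proof -
        have "\<phi> (scl ?E c x) = (\<Sum>b\<in>?B. scl M c (scl M (x b) (F b)))"
          unfolding \<phi>_def Aab_scl cscale_def using Fc by (intro sum.cong refl) (simp add: M_scl_mult[OF M])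
        also have "\<dots> = scl M c (\<phi> x)"
          unfolding \<phi>_def using Fc by (intro M_scl_sum_r[OF M, symmetric] M_scl[OF M]) auto
        finally show ?thesis .
      qed
      show "\<phi> (brk ?E x y) = brk M (\<phi> x) (\<phi> y)" for x y
      proof -
        have l: "\<phi> (brk ?E x y) = 0"
          unfolding \<phi>_def Aab_brk using Fc M_scl_zero_l[OF M] by (intro sum.neutral) auto
        have "brk M (\<phi> x) (\<phi> y) = (\<Sum>b\<in>?B. brk M (scl M (x b) (F b)) (\<phi> y))"
          unfolding \<phi>_def[of x] using Fc phic by (intro M_brk_sum_l[OF M] M_scl[OF M]) auto
        also have "\<dots> = (\<Sum>b\<in>?B. scl M (x b) (brk M (F b) (\<phi> y)))"
          using Fc phic by (intro sum.cong refl M_brk_scl_l[OF M]) auto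
        also have "\<dots> = 0"
        proof (intro sum.neutral ballI)
          fix b assume b: "b \<in> ?B"
          have "brk M (F b) (\<phi> y) = (\<Sum>c\<in>?B. brk M (F b) (scl M (y c) (F c)))"
            unfolding \<phi>_def[of y] using Fc b by (intro M_brk_sum_r[OF M] M_scl[OF M]) auto
          also have "\<dots> = (\<Sum>c\<in>?B. scl M (y c) (brk M (F b) (F c)))"
            using Fc b by (intro sum.cong refl M_brk_scl_r[OF M]) auto
          also have "\<dots> = 0" using brk0 b M_scl_zero_r[OF M] by (intro sum.neutral) auto
          finally show "scl M (x b) (brk M (F b) (\<phi> y)) = 0" using M_scl_zero_r[OF M] by simp
        qed
        finally show ?thesis using l by simp
      qed
      show "\<phi> x \<in> part M d" if x: "x \<in> part ?E d" for d x
        unfolding \<phi>_def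
      proof (rule lsubspace_sum[OF M_part_sub[OF M]])
        fix b assume b: "b \<in> ?B"
        show "scl M (x b) (F b) \<in> part M d"
        proof (cases "x b = 0")
          case True
          then show ?thesis using M_scl_zero_l[OF M Fc[OF b]] M_part_sub[OF M, of d]
            by (simp add: lsubspace_def)
        next
          case False
          then have "delta b \<in> part ?E d" using x
            by (cases d) (auto simp: part_def Aab_evp Aab_odp supp_in_def delta_def)
          then have "F b \<in> part M d" using Fpar b by blast
          then show ?thesis using M_part_sub[OF M, of d] by (simp add: lsubspace_def)
        qed
      qed
    qed
    have comm: "\<forall>x\<in>car L. \<forall>y\<in>car L. \<phi> (w x y) = f x y"
      using gen[OF M f] by (simp add: \<phi>_def F_def)
    have uniq: "\<forall>e\<in>car ?E. \<psi> e = \<phi> e"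
      if H: "lsa_hom ?E M \<psi>" and hc: "\<forall>x\<in>car L. \<forall>y\<in>car L. \<psi> (w x y) = f x y" for \<psi>
    proof
      fix e assume e: "e \<in> car ?E"
      have dc: "\<And>b. b \<in> ?B \<Longrightarrow> delta b \<in> car ?E" by (simp add: Aab_car delta_supp)
      have cdc: "\<And>b c. b \<in> ?B \<Longrightarrow> cscale c (delta b) \<in> car ?E"
        using dc Es by (metis Aab_scl lsubspace_def)
      have "\<psi> e = \<psi> (\<Sum>b\<in>?B. cscale (e b) (delta b))"
        using supp_decomp[OF finB] e by (metis Aab_car)
      also have "\<dots> = (\<Sum>b\<in>?B. \<psi> (cscale (e b) (delta b)))"
        by (rule hom_sum[OF H Es finB]) (rule cdc)
      also have "\<dots> = (\<Sum>b\<in>?B. scl M (e b) (\<psi> (delta b)))"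
        using H dc unfolding lsa_hom_def by (intro sum.cong refl) (metis Aab_scl)
      also have "\<dots> = (\<Sum>b\<in>?B. scl M (e b) (F b))"
      proof (intro sum.cong refl)
        fix b assume b: "b \<in> ?B"
        have "\<psi> (w (p b) (q b)) = f (p b) (q b)" using hc pc[OF b] qc[OF b] by blast
        then show "scl M (e b) (\<psi> (delta b)) = scl M (e b) (F b)" using pq[OF b] by (simp add: F_def)
      qed
      finally show "\<psi> e = \<phi> e" by (simp add: \<phi>_def)
    qed
    show ?thesis using hom comm uniq by blast
  qed
  show ?thesis unfolding is_ext_square_def using L E W main by blast
qed


definition sig :: "bool \<Rightarrow> bool \<Rightarrow> 'k::ring_1" where "sig p q = - psign (p \<and> q)"

definition coef :: "(idx \<Rightarrow> bool) \<Rightarrow> idx \<times> idx \<Rightarrow> (idx \<Rightarrow> 'k::field) \<Rightarrow> (idx \<Rightarrow> 'k) \<Rightarrow> 'k" where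
  "coef par cd u v = u (fst cd) * v (snd cd) +
     (if fst cd = snd cd then 0 else sig (par (fst cd)) (par (snd cd)) * u (snd cd) * v (fst cd))"

definition Wm :: "(idx \<Rightarrow> bool) \<Rightarrow> (nat \<Rightarrow> idx \<times> idx) \<Rightarrow> (nat \<Rightarrow> idx \<times> idx) \<Rightarrow> nat \<Rightarrow> nat \<Rightarrow>
    (idx \<Rightarrow> 'k::field) \<Rightarrow> (idx \<Rightarrow> 'k) \<Rightarrow> idx \<Rightarrow> 'k" where
  "Wm par g h r s u v k = (case k of
      X i \<Rightarrow> if 1 \<le> i \<and> i \<le> r then coef par (g i) u v else 0
    | Y j \<Rightarrow> if 1 \<le> j \<and> j \<le> s then coef par (h j) u v else 0
    | Z \<Rightarrow> 0)"

definition pm :: "(nat \<Rightarrow> idx \<times> idx) \<Rightarrow> (nat \<Rightarrow> idx \<times> idx) \<Rightarrow> idx \<Rightarrow> idx \<Rightarrow> 'k::field" where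
  "pm g h k = (case k of X i \<Rightarrow> delta (fst (g i)) | Y j \<Rightarrow> delta (fst (h j)) | Z \<Rightarrow> 0)"
definition qm :: "(nat \<Rightarrow> idx \<times> idx) \<Rightarrow> (nat \<Rightarrow> idx \<times> idx) \<Rightarrow> idx \<Rightarrow> idx \<Rightarrow> 'k::field" where
  "qm g h k = (case k of X i \<Rightarrow> delta (snd (g i)) | Y j \<Rightarrow> delta (snd (h j)) | Z \<Rightarrow> 0)"

lemma cscale_apply[simp]: "cscale c v k = c * v k" by (simp add: cscale_def)

lemma coef_add_l: "coef par cd (x + x') y = coef par cd x y + coef par cd x' y"
  by (simp add: coef_def algebra_simps)
lemma coef_add_r: "coef par cd x (y + y') = coef par cd x y + coef par cd x y'"
  by (simp add: coef_def algebra_simps)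
lemma coef_scl_l: "coef par cd (cscale c x) y = c * coef par cd x y"
  by (simp add: coef_def cscale_def algebra_simps)
lemma coef_scl_r: "coef par cd x (cscale c y) = c * coef par cd x y"
  by (simp add: coef_def cscale_def algebra_simps)

lemma Wm_add_l: "Wm par g h r s (x + x') y = Wm par g h r s x y + Wm par g h r s x' y"
  by (rule ext) (simp add: Wm_def coef_add_l split: idx.split)
lemma Wm_add_r: "Wm par g h r s x (y + y') = Wm par g h r s x y + Wm par g h r s x y'"
  by (rule ext) (simp add: Wm_def coef_add_r split: idx.split)
lemma Wm_scl_l: "Wm par g h r s (cscale c x) y = cscale c (Wm par g h r s x y)"
  by (rule ext) (simp add: Wm_def coef_scl_l split: idx.split)
lemma Wm_scl_r: "Wm par g h r s x (cscale c y) = cscale c (Wm par g h r s x y)"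
  by (rule ext) (simp add: Wm_def coef_scl_r split: idx.split)
lemma Wm_car: "Wm par g h r s x y \<in> supp_in (BX r \<union> BY s)"
  by (auto simp: supp_in_iff Wm_def split: idx.split)

lemma psign_sq: "psign p * psign p = (1::'k::ring_1)" by (simp add: psign_def)

locale WF =
  fixes L :: "('k::field, idx \<Rightarrow> 'k) lsa" and S :: "idx set" and par :: "idx \<Rightarrow> bool"
    and PE PO :: "(idx \<times> idx) set" and g h :: "nat \<Rightarrow> idx \<times> idx" and r s :: nat
  assumes lsa: "lie_superalgebra L"
  and carL: "car L = supp_in S" and finS: "finite S"
  and evpL: "evp L = supp_in {a\<in>S. \<not> par a}" and odpL: "odp L = supp_in {a\<in>S. par a}"
  and sclL: "scl L = cscale"
  and bg: "bij_betw g {1..r} PE" and bh: "bij_betw h {1..s} PO"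
  and PS: "\<And>a b. (a,b) \<in> PE \<union> PO \<Longrightarrow> a \<in> S \<and> b \<in> S"
  and PEpar: "\<And>a b. (a,b) \<in> PE \<Longrightarrow> par a = par b"
  and POpar: "\<And>a b. (a,b) \<in> PO \<Longrightarrow> par a \<noteq> par b"
  and diag: "\<And>a. (a,a) \<in> PE \<union> PO \<Longrightarrow> par a"
  and orient: "\<And>a b. (a,b) \<in> PE \<union> PO \<Longrightarrow> (b,a) \<in> PE \<union> PO \<Longrightarrow> a = b"
begin

abbreviation "W \<equiv> Wm par g h r s"

lemma part_nz: "x \<in> part L d \<Longrightarrow> x c \<noteq> 0 \<Longrightarrow> c \<in> S \<and> par c = d"
  by (cases d) (auto simp: part_def evpL odpL supp_in_iff)

lemma prod_nz: "x \<in> part L a \<Longrightarrow> y \<in> part L b \<Longrightarrow> x c * y d \<noteq> 0 \<Longrightarrow> par c = a \<and> par d = b"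
  using part_nz by (metis mult_zero_left mult_zero_right)

lemma g_in: "1 \<le> i \<Longrightarrow> i \<le> r \<Longrightarrow> g i \<in> PE" using bg by (auto simp: bij_betw_def)
lemma h_in: "1 \<le> i \<Longrightarrow> i \<le> s \<Longrightarrow> h i \<in> PO" using bh by (auto simp: bij_betw_def)

lemma coef_par0:
  assumes x: "x \<in> part L a" and y: "y \<in> part L b"
    and n1: "\<not> (par c = a \<and> par d = b)" and n2: "\<not> (par d = a \<and> par c = b)"
  shows "coef par (c, d) x y = 0"
proof -
  have h1: "x c * y d = 0" using prod_nz[OF x y] n1 by blast
  have h2: "x d * y c = 0" using prod_nz[OF x y] n2 by blast
  have "coef par (c, d) x y = x c * y d + (if c = d then 0 else sig (par c) (par d) * (x d * y c))"
    by (simp add: coef_def mult.assoc)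
  also have "\<dots> = 0" using h1 h2 by (simp only: mult_zero_right add_0_left if_cancel)
  finally show ?thesis .
qed

lemma coef_anti:
  assumes x: "x \<in> part L a" and y: "y \<in> part L b" and cd: "(c, d) \<in> PE \<union> PO"
  shows "coef par (c, d) x y + psign (a \<and> b) * coef par (c, d) y x = 0"
proof (cases "c = d")
  case True
  then have pc: "par c" using diag cd by blast
  have "x c * y c = 0 \<or> (a \<and> b)" using prod_nz[OF x y, of c c] pc by blast
  then show ?thesis using True by (auto simp: coef_def psign_def algebra_simps)
next
  case False
  have e: "coef par (c, d) x y + psign (a \<and> b) * coef par (c, d) y x
      = x c * y d * (1 + psign (a \<and> b) * sig (par c) (par d)) + x d * y c * (sig (par c) (par d) + psign (a \<and> b))"
    using False by (simp add: coef_def algebra_simps)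
  have h1: "x c * y d * (1 + psign (a \<and> b) * sig (par c) (par d)) = 0"
  proof (cases "x c * y d = 0")
    case False
    then have "par c = a" "par d = b" using prod_nz[OF x y] by blast+
    then show ?thesis by (simp add: sig_def psign_sq)
  qed simp
  have h2: "x d * y c * (sig (par c) (par d) + psign (a \<and> b)) = 0"
  proof (cases "x d * y c = 0")
    case False
    then have "par d = a" "par c = b" using prod_nz[OF x y] by blast+
    then show ?thesis by (auto simp: sig_def psign_def)
  qed simp
  show ?thesis using e h1 h2 by simp
qed

lemma coef_diag:
  assumes x: "x \<in> evp L" and cd: "(c, d) \<in> PE \<union> PO"
  shows "coef par (c, d) x x = 0"
proof -
  have xp: "x \<in> part L False" using x by (simp add: part_def)
  show ?thesis
  proof (cases "c = d")
    case True
    then have "par c" using diag cd by blast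
    then have "x c = 0" using part_nz[OF xp, of c] by blast
    then show ?thesis using True by (simp add: coef_def)
  next
    case False
    have "x c * x d * (1 + sig (par c) (par d)) = 0"
    proof (cases "x c * x d = 0")
      case False
      then have "\<not> par c" "\<not> par d" using prod_nz[OF xp xp] by blast+
      then show ?thesis by (simp add: sig_def psign_def)
    qed simp
    then show ?thesis using False by (simp add: coef_def algebra_simps)
  qed
qed

lemma W_par:
  assumes x: "x \<in> part L a" and y: "y \<in> part L b"
  shows "W x y \<in> part (Aab r s) (a \<noteq> b)"
proof (cases "a = b")
  case True
  have "W x y \<in> supp_in (BX r)"
  proof (rule supp_inI)
    fix k assume k: "k \<notin> BX r"
    show "W x y k = 0"
    proof (cases k)
      case (X i) then show ?thesis using k by (auto simp: Wm_def)
    next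
      case (Y j)
      show ?thesis
      proof (cases "1 \<le> j \<and> j \<le> s")
        case True
        obtain c d where hj: "h j = (c, d)" by fastforce
        have "(c, d) \<in> PO" using h_in True hj by metis
        then have "par c \<noteq> par d" by (rule POpar)
        then have "coef par (c, d) x y = 0" using \<open>a = b\<close> by (intro coef_par0[OF x y]) auto
        then show ?thesis using Y True hj by (simp add: Wm_def)
      qed (auto simp: Wm_def Y)
    qed (simp add: Wm_def)
  qed
  then show ?thesis using True by (simp add: part_def Aab_evp)
next
  case False
  have "W x y \<in> supp_in (BY s)"
  proof (rule supp_inI)
    fix k assume k: "k \<notin> BY s"
    show "W x y k = 0"
    proof (cases k)
      case (Y i) then show ?thesis using k by (auto simp: Wm_def)
    next
      case (X j)
      show ?thesis
      proof (cases "1 \<le> j \<and> j \<le> r")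
        case True
        obtain c d where hj: "g j = (c, d)" by fastforce
        have "(c, d) \<in> PE" using g_in True hj by metis
        then have "par c = par d" by (rule PEpar)
        then have "coef par (c, d) x y = 0" using \<open>a \<noteq> b\<close> by (intro coef_par0[OF x y]) auto
        then show ?thesis using X True hj by (simp add: Wm_def)
      qed (auto simp: Wm_def X)
    qed (simp add: Wm_def)
  qed
  then show ?thesis using False by (simp add: part_def Aab_odp)
qed

lemma W_anti:
  assumes x: "x \<in> part L a" and y: "y \<in> part L b"
  shows "W x y + cscale (psign (a \<and> b)) (W y x) = 0"
proof (rule ext)
  fix k
  show "(W x y + cscale (psign (a \<and> b)) (W y x)) k = 0 k"
  proof (cases k)
    case (X i)
    show ?thesis
    proof (cases "1 \<le> i \<and> i \<le> r")
      case True
      obtain c d where gi: "g i = (c, d)" by fastforce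
      have "(c, d) \<in> PE \<union> PO" using g_in True gi by (metis UnI1)
      then show ?thesis using coef_anti[OF x y] X True gi by (simp add: Wm_def cscale_def)
    qed (auto simp: Wm_def X)
  next
    case (Y i)
    show ?thesis
    proof (cases "1 \<le> i \<and> i \<le> s")
      case True
      obtain c d where gi: "h i = (c, d)" by fastforce
      have "(c, d) \<in> PE \<union> PO" using h_in True gi by (metis UnI2)
      then show ?thesis using coef_anti[OF x y] Y True gi by (simp add: Wm_def cscale_def)
    qed (auto simp: Wm_def Y)
  qed (simp add: Wm_def cscale_def)
qed

lemma W_diag:
  assumes x: "x \<in> evp L"
  shows "W x x = 0"
proof (rule ext)
  fix k
  show "W x x k = 0 k"
  proof (cases k)
    case (X i)
    show ?thesis
    proof (cases "1 \<le> i \<and> i \<le> r")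
      case True
      obtain c d where gi: "g i = (c, d)" by fastforce
      have "(c, d) \<in> PE \<union> PO" using g_in True gi by (metis UnI1)
      then show ?thesis using coef_diag[OF x] X True gi by (simp add: Wm_def)
    qed (auto simp: Wm_def X)
  next
    case (Y i)
    show ?thesis
    proof (cases "1 \<le> i \<and> i \<le> s")
      case True
      obtain c d where gi: "h i = (c, d)" by fastforce
      have "(c, d) \<in> PE \<union> PO" using h_in True gi by (metis UnI2)
      then show ?thesis using coef_diag[OF x] Y True gi by (simp add: Wm_def)
    qed (auto simp: Wm_def Y)
  qed (simp add: Wm_def)
qed

lemma W_ext:
  assumes r7: "\<forall>a b. \<forall>x\<in>part L a. \<forall>x'\<in>part L b. \<forall>y\<in>car L.
        W (brk L x x') y = W x (brk L x' y) - cscale (psign (a \<and> b)) (W x' (brk L x y))"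
    and r8: "\<forall>a b c. \<forall>x\<in>part L a. \<forall>y\<in>part L b. \<forall>y'\<in>part L c.
        W x (brk L y y') = cscale (psign (c \<and> (a \<noteq> b))) (W (brk L y' x) y)
                         - cscale (psign (a \<and> b)) (W (brk L y x) y')"
    and r9: "\<forall>a b. \<forall>x\<in>part L a. \<forall>y\<in>part L b. \<forall>x'\<in>car L. \<forall>y'\<in>car L.
        W (brk L y x) (brk L x' y') = 0"
  shows "ext_pairing L (Aab r s) W"
  unfolding ext_pairing_def Aab_car Aab_scl Aab_brk sclL
proof (intro conjI)
  show "\<forall>a b. \<forall>x\<in>part L a. \<forall>y\<in>part L b. W x y \<in> part (Aab r s) (a \<noteq> b)"
    using W_par by blast
  show "\<forall>a b. \<forall>x\<in>part L a. \<forall>y\<in>part L b. \<forall>x'\<in>car L. \<forall>y'\<in>car L.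
        (0::idx \<Rightarrow> 'k) = - cscale (psign (a \<and> b)) (W (brk L y x) (brk L x' y'))"
    using r9 by (simp add: cscale_facts)
  show "\<forall>a b. \<forall>x\<in>part L a. \<forall>y\<in>part L b. W x y + cscale (psign (a \<and> b)) (W y x) = 0"
    using W_anti by blast
  show "\<forall>x\<in>evp L. W x x = 0" using W_diag by blast
qed (use r7 r8 in \<open>simp_all add: Wm_car Wm_add_l Wm_add_r Wm_scl_l Wm_scl_r\<close>)

end


lemma bil_via:
  fixes L :: "('k::field, idx \<Rightarrow> 'k) lsa" and M :: "('k, 'm::ab_group_add) lsa"
  assumes M: "lie_superalgebra M" and w: "bil L (Aab r s) w" and finB: "finite B"
    and Fc: "\<And>k. k \<in> B \<Longrightarrow> F k \<in> car M"
  shows "bil L M (\<lambda>x y. \<Sum>k\<in>B. scl M (w x y k) (F k))"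
  unfolding bil_def
proof (intro conjI ballI allI)
  fix x y assume x: "x \<in> car L" and y: "y \<in> car L"
  show "(\<Sum>k\<in>B. scl M (w x y k) (F k)) \<in> car M" using Fc by (intro M_sum_car[OF M] M_scl[OF M]) auto
  fix c
  have "(\<Sum>k\<in>B. scl M (w (scl L c x) y k) (F k)) = (\<Sum>k\<in>B. scl M c (scl M (w x y k) (F k)))"
    using bil_scl_l[OF w x y, of c] Fc by (intro sum.cong refl) (simp add: Aab_scl M_scl_mult[OF M])
  also have "\<dots> = scl M c (\<Sum>k\<in>B. scl M (w x y k) (F k))"
    using Fc by (intro M_scl_sum_r[OF M, symmetric] M_scl[OF M]) auto
  finally show "(\<Sum>k\<in>B. scl M (w (scl L c x) y k) (F k)) = scl M c (\<Sum>k\<in>B. scl M (w x y k) (F k))" .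
  have "(\<Sum>k\<in>B. scl M (w x (scl L c y) k) (F k)) = (\<Sum>k\<in>B. scl M c (scl M (w x y k) (F k)))"
    using bil_scl_r[OF w x y, of c] Fc by (intro sum.cong refl) (simp add: Aab_scl M_scl_mult[OF M])
  also have "\<dots> = scl M c (\<Sum>k\<in>B. scl M (w x y k) (F k))"
    using Fc by (intro M_scl_sum_r[OF M, symmetric] M_scl[OF M]) auto
  finally show "(\<Sum>k\<in>B. scl M (w x (scl L c y) k) (F k)) = scl M c (\<Sum>k\<in>B. scl M (w x y k) (F k))" .
next
  fix x x' y assume x: "x \<in> car L" and x': "x' \<in> car L" and y: "y \<in> car L"
  show "(\<Sum>k\<in>B. scl M (w (x + x') y k) (F k)) = (\<Sum>k\<in>B. scl M (w x y k) (F k)) + (\<Sum>k\<in>B. scl M (w x' y k) (F k))"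
    using bil_add_l[OF w x x' y] Fc by (simp add: M_scl_add_l[OF M] sum.distrib[symmetric])
next
  fix x y y' assume x: "x \<in> car L" and y: "y \<in> car L" and y': "y' \<in> car L"
  show "(\<Sum>k\<in>B. scl M (w x (y + y') k) (F k)) = (\<Sum>k\<in>B. scl M (w x y k) (F k)) + (\<Sum>k\<in>B. scl M (w x y' k) (F k))"
    using bil_add_r[OF w x y y'] Fc by (simp add: M_scl_add_l[OF M] sum.distrib[symmetric])
qed

lemma sum_delta_scl:
  fixes M :: "('k::field, 'm::ab_group_add) lsa"
  assumes M: "lie_superalgebra M" and finB: "finite B" and k0: "k0 \<in> B"
    and Fc: "\<And>k. k \<in> B \<Longrightarrow> F k \<in> car M"
  shows "(\<Sum>k\<in>B. scl M (c * delta k0 k) (F k)) = scl M c (F k0)"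
proof -
  have "(\<Sum>k\<in>B. scl M (c * delta k0 k) (F k)) = (\<Sum>k\<in>B. if k = k0 then scl M c (F k) else 0)"
    using Fc M_scl_zero_l[OF M] by (intro sum.cong refl) (auto simp: delta_def)
  also have "\<dots> = scl M c (F k0)" using finB k0 by simp
  finally show ?thesis .
qed

context WF
begin

definition pr :: "idx \<Rightarrow> idx \<times> idx" where
  "pr k = (case k of X i \<Rightarrow> g i | Y j \<Rightarrow> h j | Z \<Rightarrow> undefined)"

abbreviation "B \<equiv> BX r \<union> BY s"
abbreviation "P \<equiv> PE \<union> PO"

lemma PE_PO_disj: "PE \<inter> PO = {}" using PEpar POpar by fastforce

lemma pr_X[simp]: "pr (X i) = g i" by (simp add: pr_def)
lemma pr_Y[simp]: "pr (Y i) = h i" by (simp add: pr_def)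

lemma pr_bij: "bij_betw pr B P"
proof -
  have i1: "inj_on g {1..r}" using bg by (rule bij_betw_imp_inj_on)
  have i2: "inj_on h {1..s}" using bh by (rule bij_betw_imp_inj_on)
  have im1: "g ` {1..r} = PE" using bg by (rule bij_betw_imp_surj_on)
  have im2: "h ` {1..s} = PO" using bh by (rule bij_betw_imp_surj_on)
  show ?thesis unfolding bij_betw_def
  proof
    have iX: "inj_on X A" for A by (simp add: inj_on_def)
    have iY: "inj_on Y A" for A by (simp add: inj_on_def)
    have c1: "pr \<circ> X = g" by (rule ext) simp
    have c2: "pr \<circ> Y = h" by (rule ext) simp
    have j1: "inj_on pr (BX r)" unfolding BX_eq using comp_inj_on_iff[OF iX, of pr "{1..r}"] i1 c1 by simp
    have j2: "inj_on pr (BY s)" unfolding BY_eq using comp_inj_on_iff[OF iY, of pr "{1..s}"] i2 c2 by simp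
    have pX: "pr ` BX r = PE" using im1 by (simp add: BX_eq image_image)
    have pY: "pr ` BY s = PO" using im2 by (simp add: BY_eq image_image)
    have "pr ` (BX r - BY s) \<inter> pr ` (BY s - BX r) = {}" using pX pY PE_PO_disj by blast
    then show "inj_on pr B" using j1 j2 by (simp add: inj_on_Un)
    have "pr ` BX r = PE" using im1 by (simp add: BX_eq image_image)
    moreover have "pr ` BY s = PO" using im2 by (simp add: BY_eq image_image)
    ultimately show "pr ` B = P" by (simp add: image_Un)
  qed
qed

definition ix :: "idx \<times> idx \<Rightarrow> idx" where "ix = the_inv_into B pr"

lemma ix_in: "cd \<in> P \<Longrightarrow> ix cd \<in> B"
  unfolding ix_def using pr_bij by (metis bij_betw_def the_inv_into_into order_refl)
lemma pr_ix: "cd \<in> P \<Longrightarrow> pr (ix cd) = cd"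
  unfolding ix_def using pr_bij by (metis bij_betw_def f_the_inv_into_f)
lemma ix_pr: "k \<in> B \<Longrightarrow> ix (pr k) = k"
  unfolding ix_def using pr_bij by (metis bij_betw_def the_inv_into_f_f)
lemma pr_in: "k \<in> B \<Longrightarrow> pr k \<in> P"
  using pr_bij by (metis bij_betw_def imageI)
lemma pr_eq_iff: "k \<in> B \<Longrightarrow> cd \<in> P \<Longrightarrow> pr k = cd \<longleftrightarrow> k = ix cd"
  using pr_ix ix_pr by metis

lemma W_alt: "W u v k = (if k \<in> B then coef par (pr k) u v else 0)"
  by (cases k) (auto simp: Wm_def pr_def)

lemma coef_delta: "coef par (c, d) (delta a) (delta b) =
   (if (c, d) = (a, b) then 1 else 0) + (if c \<noteq> d \<and> (c, d) = (b, a) then sig (par c) (par d) else 0)"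
  unfolding coef_def delta_def fst_conv snd_conv
  by (cases "c = a"; cases "d = b"; cases "c = d"; cases "d = a"; cases "c = b") simp_all

lemma W_basis1:
  assumes ab: "(a, b) \<in> P"
  shows "W (delta a) (delta b) = delta (ix (a, b))"
proof (rule ext)
  fix k
  show "W (delta a) (delta b) k = delta (ix (a, b)) k"
  proof (cases "k \<in> B")
    case True
    obtain c d where cd: "pr k = (c, d)" by fastforce
    have cdP: "(c, d) \<in> P" using pr_in[OF True] cd by simp
    have "\<not> (c \<noteq> d \<and> (c, d) = (b, a))" using orient ab cdP by blast
    then have "coef par (c, d) (delta a) (delta b) = (if (c, d) = (a, b) then 1 else 0)"
      by (auto simp: coef_delta)
    moreover have "(c, d) = (a, b) \<longleftrightarrow> k = ix (a, b)" using pr_eq_iff[OF True ab] cd by simp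
    ultimately show ?thesis using True cd by (simp add: W_alt delta_def eq_commute)
  next
    case False
    then have "k \<noteq> ix (a, b)" using ix_in[OF ab] by blast
    then show ?thesis using False by (simp add: W_alt delta_def)
  qed
qed

lemma W_basis2:
  assumes ba: "(b, a) \<in> P" and ne: "a \<noteq> b"
  shows "W (delta a) (delta b) = cscale (sig (par b) (par a)) (delta (ix (b, a)))"
proof (rule ext)
  fix k
  show "W (delta a) (delta b) k = cscale (sig (par b) (par a)) (delta (ix (b, a))) k"
  proof (cases "k \<in> B")
    case True
    obtain c d where cd: "pr k = (c, d)" by fastforce
    have cdP: "(c, d) \<in> P" using pr_in[OF True] cd by simp
    have nab: "(c, d) \<noteq> (a, b)"
    proof
      assume "(c, d) = (a, b)"
      then have "(a, b) \<in> P" using cdP by simp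
      then show False using orient[OF _ ba] ne by blast
    qed
    have "coef par (c, d) (delta a) (delta b) = (if (c, d) = (b, a) then sig (par b) (par a) else 0)"
    proof (cases "(c, d) = (b, a)")
      case True
      then have "c = b" "d = a" by auto
      then show ?thesis using ne nab by (simp add: coef_delta)
    next
      case False
      then show ?thesis using nab by (simp only: coef_delta if_False) simp
    qed
    moreover have iff: "(c, d) = (b, a) \<longleftrightarrow> k = ix (b, a)" using pr_eq_iff[OF True ba] cd by simp
    ultimately have "W (delta a) (delta b) k = (if k = ix (b, a) then sig (par b) (par a) else 0)"
      using True cd by (simp add: W_alt)
    also have "\<dots> = cscale (sig (par b) (par a)) (delta (ix (b, a))) k" by (simp add: delta_def)
    finally show ?thesis .
  next
    case False
    then have "k \<noteq> ix (b, a)" using ix_in[OF ba] by blast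
    then show ?thesis using False by (simp add: W_alt delta_def)
  qed
qed

lemma W_basis0:
  assumes "(a, b) \<notin> P" "(b, a) \<notin> P"
  shows "W (delta a) (delta b) = 0"
proof (rule ext)
  fix k
  show "W (delta a) (delta b) k = 0 k"
  proof (cases "k \<in> B")
    case True
    obtain c d where cd: "pr k = (c, d)" by fastforce
    have cdP: "(c, d) \<in> P" using pr_in[OF True] cd by simp
    then have n1: "(c, d) \<noteq> (a, b)" and n2: "(c, d) \<noteq> (b, a)" using assms by auto
    have "W (delta a) (delta b) k = coef par (c, d) (delta a) (delta b)" using True cd by (simp add: W_alt)
    also have "\<dots> = 0" using n1 n2 by (simp only: coef_delta if_False) simp
    finally show ?thesis by simp
  qed (simp add: W_alt)
qed

lemma delta_part: "a \<in> S \<Longrightarrow> delta a \<in> part L (par a)"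
proof (cases "par a")
  case True
  assume "a \<in> S"
  then have "a \<in> {a \<in> S. par a}" using True by simp
  then show ?thesis using True by (simp add: part_def odpL delta_supp)
next
  case False
  assume "a \<in> S"
  then have "a \<in> {a \<in> S. \<not> par a}" using False by simp
  then show ?thesis using False by (simp add: part_def evpL delta_supp)
qed

lemma delta_car: "a \<in> S \<Longrightarrow> delta a \<in> car L"
  by (simp add: carL delta_supp)

end


context WF
begin

theorem WF_square:
  assumes r7: "\<forall>a b. \<forall>x\<in>part L a. \<forall>x'\<in>part L b. \<forall>y\<in>car L.
        W (brk L x x') y = W x (brk L x' y) - cscale (psign (a \<and> b)) (W x' (brk L x y))"
    and r8: "\<forall>a b c. \<forall>x\<in>part L a. \<forall>y\<in>part L b. \<forall>y'\<in>part L c.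
        W x (brk L y y') = cscale (psign (c \<and> (a \<noteq> b))) (W (brk L y' x) y)
                         - cscale (psign (a \<and> b)) (W (brk L y x) y')"
    and r9: "\<forall>a b. \<forall>x\<in>part L a. \<forall>y\<in>part L b. \<forall>x'\<in>car L. \<forall>y'\<in>car L.
        W (brk L y x) (brk L x' y') = 0"
    and Zh: "\<And>(M::('k, 'm::ab_group_add) lsa) f a b. lie_superalgebra M \<Longrightarrow> ext_pairing L M f \<Longrightarrow>
        a \<in> S \<Longrightarrow> b \<in> S \<Longrightarrow> (a, b) \<notin> P \<Longrightarrow> (b, a) \<notin> P \<Longrightarrow> f (delta a) (delta b) = 0"
  shows "is_ext_square L (Aab r s) TYPE('m)"
proof -
  have Wext: "ext_pairing L (Aab r s) W" by (rule W_ext[OF r7 r8 r9])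
  define p where "p k = (delta (fst (pr k)) :: idx \<Rightarrow> 'k)" for k
  define q where "q k = (delta (snd (pr k)) :: idx \<Rightarrow> 'k)" for k
  have prS: "fst (pr k) \<in> S \<and> snd (pr k) \<in> S" if "k \<in> B" for k
    using pr_in[OF that] PS by (metis prod.collapse)
  show ?thesis
  proof (rule univ_A[OF lsa Wext])
    fix k assume k: "k \<in> B"
    show "\<exists>a. p k \<in> part L a" using delta_part prS[OF k] unfolding p_def by blast
    show "\<exists>a. q k \<in> part L a" using delta_part prS[OF k] unfolding q_def by blast
    show "W (p k) (q k) = delta k"
      using W_basis1[of "fst (pr k)" "snd (pr k)"] pr_in[OF k] ix_pr[OF k] unfolding p_def q_def by simp
  next
    fix M :: "('k, 'm) lsa" and f x y
    assume M: "lie_superalgebra M" and f: "ext_pairing L M f" and x: "x \<in> car L" and y: "y \<in> car L"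
    define F where "F k = f (p k) (q k)" for k
    have Fc: "F k \<in> car M" if "k \<in> B" for k
      unfolding F_def p_def q_def using ep_car[OF f] delta_car prS[OF that] by blast
    have Ls: "lsubspace L (car L)" by (rule M_sub[OF lsa])
    have finB: "finite B" by (rule finite_B)
    have "f x y = (\<Sum>k\<in>B. scl M (W x y k) (F k))"
    proof (rule bil_agree[OF M ext_bil[OF f] bil_via[OF M ext_bil[OF Wext] finB Fc] Ls carL finS sclL _ x y])
      fix a b assume a: "a \<in> S" and b: "b \<in> S"
      show "f (delta a) (delta b) = (\<Sum>k\<in>B. scl M (W (delta a) (delta b) k) (F k))"
      proof (cases "(a, b) \<in> P")
        case True
        have "(\<Sum>k\<in>B. scl M (W (delta a) (delta b) k) (F k)) = (\<Sum>k\<in>B. scl M (1 * delta (ix (a, b)) k) (F k))"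
          by (simp only: W_basis1[OF True] mult_1)
        also have "\<dots> = scl M 1 (F (ix (a, b)))" by (rule sum_delta_scl[OF M finB ix_in[OF True] Fc])
        also have "\<dots> = F (ix (a, b))" using M_scl_one[OF M Fc[OF ix_in[OF True]]] .
        also have "\<dots> = f (delta a) (delta b)" using pr_ix[OF True] by (simp add: F_def p_def q_def)
        finally show ?thesis by simp
      next
        case False
        show ?thesis
        proof (cases "(b, a) \<in> P \<and> a \<noteq> b")
          case True
          then have ba: "(b, a) \<in> P" and ne: "a \<noteq> b" by auto
          have "(\<Sum>k\<in>B. scl M (W (delta a) (delta b) k) (F k))
              = (\<Sum>k\<in>B. scl M (sig (par b) (par a) * delta (ix (b, a)) k) (F k))"
            by (simp only: W_basis2[OF ba ne] cscale_apply)
          also have "\<dots> = scl M (sig (par b) (par a)) (F (ix (b, a)))"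
            by (rule sum_delta_scl[OF M finB ix_in[OF ba] Fc])
          also have "\<dots> = scl M (sig (par b) (par a)) (f (delta b) (delta a))"
            using pr_ix[OF ba] by (simp add: F_def p_def q_def)
          also have "\<dots> = - scl M (psign (par a \<and> par b)) (f (delta b) (delta a))"
            using M_scl_neg[OF M ep_car[OF f delta_car[OF b] delta_car[OF a]]]
            by (simp add: sig_def conj_commute)
          also have "\<dots> = f (delta a) (delta b)"
            using ep_anti[OF f delta_part[OF a] delta_part[OF b]] by (metis add.commute minus_unique)
          finally show ?thesis by simp
        next
          case False
          then have nba: "(b, a) \<notin> P" using \<open>(a, b) \<notin> P\<close> by auto
          have "(\<Sum>k\<in>B. scl M (W (delta a) (delta b) k) (F k)) = (\<Sum>k\<in>B. scl M 0 (F k))"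
            by (simp only: W_basis0[OF \<open>(a, b) \<notin> P\<close> nba] zero_fun_apply)
          also have "\<dots> = 0" using Fc M_scl_zero_l[OF M] by (intro sum.neutral) auto
          finally have "(\<Sum>k\<in>B. scl M (W (delta a) (delta b) k) (F k)) = 0" .
          then show ?thesis using Zh[OF M f a b \<open>(a, b) \<notin> P\<close> nba] by simp
        qed
      qed
    qed
    then show "f x y = (\<Sum>k\<in>B. scl M (W x y k) (f (p k) (q k)))" by (simp add: F_def)
  qed
qed

end


lemma lsa_central:
  fixes L :: "('k::field, idx \<Rightarrow> 'k) lsa" and Q :: "(idx \<Rightarrow> 'k) \<Rightarrow> (idx \<Rightarrow> 'k) \<Rightarrow> 'k"
  assumes carL: "car L = supp_in (A \<union> B)" and evpL: "evp L = supp_in A" and odpL: "odp L = supp_in B"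
    and AB: "A \<inter> B = {}" and sclL: "scl L = cscale"
    and brkL: "brk L = (\<lambda>u v i. if i = Z then Q u v else 0)"
    and ZS: "Z \<in> (if zp then B else A)"
    and Qal: "\<And>x x' y. Q (x + x') y = Q x y + Q x' y"
    and Qar: "\<And>x y y'. Q x (y + y') = Q x y + Q x y'"
    and Qsl: "\<And>c x y. Q (cscale c x) y = c * Q x y"
    and Qsr: "\<And>c x y. Q x (cscale c y) = c * Q x y"
    and Qpar: "\<And>a b x y. x \<in> part L a \<Longrightarrow> y \<in> part L b \<Longrightarrow> (a \<noteq> b) \<noteq> zp \<Longrightarrow> Q x y = 0"
    and Qanti: "\<And>a b x y. x \<in> part L a \<Longrightarrow> y \<in> part L b \<Longrightarrow> Q x y = - (psign (a \<and> b) * Q y x)"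
    and Qcen: "\<And>u v. (\<And>i. i \<noteq> Z \<Longrightarrow> v i = 0) \<Longrightarrow> Q u v = 0"
  shows "lie_superalgebra L"
proof -
  have sub: "lsubspace L (supp_in C)" for C by (rule lsubspace_supp[OF sclL])
  have brk0: "brk L u v = 0" if "Q u v = 0" for u v using that by (simp add: brkL fun_eq_iff)
  have ZAB: "Z \<in> A \<union> B" using ZS by (auto split: if_splits)
  have brkcar: "brk L u v \<in> supp_in (A \<union> B)" for u v
    using ZAB by (auto simp: brkL supp_in_iff)
  have partZ: "brk L u v \<in> part L zp" for u v
    using ZS by (cases zp) (auto simp: brkL supp_in_iff part_def evpL odpL)
  have z0: "(0::idx \<Rightarrow> 'k) \<in> supp_in C" for C by (simp add: supp_in_def)
  have jac: "brk L x (brk L y z) = 0" for x y z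
    by (rule brk0, rule Qcen) (simp add: brkL)
  show ?thesis
    unfolding lie_superalgebra_def
  proof (intro conjI)
    show "lsubspace L (car L)" "lsubspace L (evp L)" "lsubspace L (odp L)"
      unfolding carL evpL odpL by (rule sub)+
    show "evp L \<subseteq> car L" "odp L \<subseteq> car L" unfolding carL evpL odpL by (rule supp_in_mono; blast)+
    show "evp L \<inter> odp L = {0}" unfolding evpL odpL by (rule supp_in_inter0[OF AB])
    show "\<forall>x\<in>car L. \<exists>u\<in>evp L. \<exists>v\<in>odp L. x = u + v"
      unfolding carL evpL odpL using supp_in_decomp2[OF AB] by blast
    show "\<forall>a. \<forall>x\<in>car L. \<forall>y\<in>car L. scl L a (x + y) = scl L a x + scl L a y"
      "\<forall>a b. \<forall>x\<in>car L. scl L (a + b) x = scl L a x + scl L b x"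
      "\<forall>a b. \<forall>x\<in>car L. scl L a (scl L b x) = scl L (a * b) x"
      "\<forall>x\<in>car L. scl L 1 x = x"
      unfolding sclL by (simp_all add: cscale_facts)
    show "\<forall>x\<in>car L. \<forall>y\<in>car L. brk L x y \<in> car L" unfolding carL using brkcar by blast
    show "\<forall>x\<in>car L. \<forall>x'\<in>car L. \<forall>y\<in>car L. brk L (x + x') y = brk L x y + brk L x' y"
      by (simp add: brkL Qal fun_eq_iff)
    show "\<forall>x\<in>car L. \<forall>y\<in>car L. \<forall>y'\<in>car L. brk L x (y + y') = brk L x y + brk L x y'"
      by (simp add: brkL Qar fun_eq_iff)
    show "\<forall>c. \<forall>x\<in>car L. \<forall>y\<in>car L. brk L (scl L c x) y = scl L c (brk L x y)"
      by (simp add: brkL sclL Qsl fun_eq_iff)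
    show "\<forall>c. \<forall>x\<in>car L. \<forall>y\<in>car L. brk L x (scl L c y) = scl L c (brk L x y)"
      by (simp add: brkL sclL Qsr fun_eq_iff)
    show "\<forall>a b. \<forall>x\<in>part L a. \<forall>y\<in>part L b. brk L x y \<in> part L (a \<noteq> b)"
    proof (intro allI ballI)
      fix a b x y assume x: "x \<in> part L a" and y: "y \<in> part L b"
      show "brk L x y \<in> part L (a \<noteq> b)"
      proof (cases "(a \<noteq> b) = zp")
        case True then show ?thesis using partZ by simp
      next
        case False
        then have "brk L x y = 0" using Qpar[OF x y] brk0 by simp
        then show ?thesis by (cases "a \<noteq> b") (simp_all add: part_def evpL odpL z0)
      qed
    qed
    show "\<forall>a b. \<forall>x\<in>part L a. \<forall>y\<in>part L b. brk L x y = - scl L (psign (a \<and> b)) (brk L y x)"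
    proof (intro allI ballI ext)
      fix a b x y i assume x: "x \<in> part L a" and y: "y \<in> part L b"
      show "brk L x y i = (- scl L (psign (a \<and> b)) (brk L y x)) i"
        using Qanti[OF x y] by (simp add: brkL sclL)
    qed
    show "\<forall>a b c. \<forall>x\<in>part L a. \<forall>y\<in>part L b. \<forall>z\<in>part L c.
        scl L (psign (a \<and> c)) (brk L x (brk L y z))
      + scl L (psign (b \<and> a)) (brk L y (brk L z x))
      + scl L (psign (c \<and> b)) (brk L z (brk L x y)) = 0"
      by (simp add: jac sclL cscale_facts)
  qed
qed


definition QH :: "nat \<Rightarrow> nat \<Rightarrow> (idx \<Rightarrow> 'k::field) \<Rightarrow> (idx \<Rightarrow> 'k) \<Rightarrow> 'k" where
  "QH m n u v = (\<Sum>k=1..m. u (X k) * v (X (m + k)) - u (X (m + k)) * v (X k)) + (\<Sum>j=1..n. u (Y j) * v (Y j))"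

definition QM :: "nat \<Rightarrow> (idx \<Rightarrow> 'k::field) \<Rightarrow> (idx \<Rightarrow> 'k) \<Rightarrow> 'k" where
  "QM m u v = (\<Sum>j=1..m. u (X j) * v (Y j) - u (Y j) * v (X j))"

definition XS :: "nat \<Rightarrow> idx set" where "XS N = {X i | i. 1 \<le> i \<and> i \<le> N}"
definition YS :: "nat \<Rightarrow> idx set" where "YS N = {Y i | i. 1 \<le> i \<and> i \<le> N}"

lemma XS_simps[simp]: "X i \<in> XS N \<longleftrightarrow> 1 \<le> i \<and> i \<le> N" "Y i \<notin> XS N" "Z \<notin> XS N"
  by (auto simp: XS_def)
lemma YS_simps[simp]: "Y i \<in> YS N \<longleftrightarrow> 1 \<le> i \<and> i \<le> N" "X i \<notin> YS N" "Z \<notin> YS N"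
  by (auto simp: YS_def)

lemma Hmn_car: "car (Hmn m n) = supp_in ((XS (2*m) \<union> {Z}) \<union> YS n)"
  by (simp add: Hmn_def XS_def YS_def)
lemma Hmn_evp: "evp (Hmn m n) = supp_in (XS (2*m) \<union> {Z})"
  by (simp add: Hmn_def XS_def)
lemma Hmn_odp: "odp (Hmn m n) = supp_in (YS n)"
  by (simp add: Hmn_def YS_def)
lemma Hmn_scl: "scl (Hmn m n) = cscale" by (simp add: Hmn_def)
lemma Hmn_brk: "brk (Hmn m n :: ('k::field, idx \<Rightarrow> 'k) lsa) = (\<lambda>u v i. if i = Z then QH m n u v else 0)"
  unfolding Hmn_def QH_def by simp

lemma Hm_car: "car (Hm m) = supp_in (XS m \<union> (YS m \<union> {Z}))"
  by (simp add: Hm_def XS_def YS_def Un_assoc)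
lemma Hm_evp: "evp (Hm m) = supp_in (XS m)"
  by (simp add: Hm_def XS_def)
lemma Hm_odp: "odp (Hm m) = supp_in (YS m \<union> {Z})"
  by (simp add: Hm_def YS_def)
lemma Hm_scl: "scl (Hm m) = cscale" by (simp add: Hm_def)
lemma Hm_brk: "brk (Hm m :: ('k::field, idx \<Rightarrow> 'k) lsa) = (\<lambda>u v i. if i = Z then QM m u v else 0)"
  unfolding Hm_def QM_def by simp

lemma QH_add_l: "QH m n (x + x') y = QH m n x y + QH m n x' y"
  by (simp add: QH_def algebra_simps sum.distrib sum_subtractf)
lemma QH_add_r: "QH m n x (y + y') = QH m n x y + QH m n x y'"
  by (simp add: QH_def algebra_simps sum.distrib sum_subtractf)
lemma QH_scl_l: "QH m n (cscale c x) y = c * QH m n x y"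
  by (simp add: QH_def algebra_simps sum_distrib_left)
lemma QH_scl_r: "QH m n x (cscale c y) = c * QH m n x y"
  by (simp add: QH_def algebra_simps sum_distrib_left)

lemma QM_add_l: "QM m (x + x') y = QM m x y + QM m x' y"
  by (simp add: QM_def algebra_simps sum.distrib sum_subtractf)
lemma QM_add_r: "QM m x (y + y') = QM m x y + QM m x y'"
  by (simp add: QM_def algebra_simps sum.distrib sum_subtractf)
lemma QM_scl_l: "QM m (cscale c x) y = c * QM m x y"
  by (simp add: QM_def algebra_simps sum_distrib_left)
lemma QM_scl_r: "QM m x (cscale c y) = c * QM m x y"
  by (simp add: QM_def algebra_simps sum_distrib_left)

lemma Hmn_part:
  assumes "x \<in> part (Hmn m n) a"
  shows "a \<Longrightarrow> x (X k) = 0" "\<not> a \<Longrightarrow> x (Y k) = 0" "a \<Longrightarrow> x Z = 0"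
  using assms by (auto simp: part_def Hmn_evp Hmn_odp supp_in_iff split: if_splits)

lemma Hm_part:
  assumes "x \<in> part (Hm m) a"
  shows "a \<Longrightarrow> x (X k) = 0" "\<not> a \<Longrightarrow> x (Y k) = 0" "\<not> a \<Longrightarrow> x Z = 0"
  using assms by (auto simp: part_def Hm_evp Hm_odp supp_in_iff split: if_splits)

lemma Hmn_lsa: "lie_superalgebra (Hmn m n :: ('k::field, idx \<Rightarrow> 'k) lsa)"
proof (rule lsa_central[OF Hmn_car Hmn_evp Hmn_odp _ Hmn_scl Hmn_brk, where zp = False])
  show "(XS (2 * m) \<union> {Z}) \<inter> YS n = {}" by (auto simp: XS_def YS_def)
  show "Z \<in> (if False then YS n else XS (2 * m) \<union> {Z})" by simp
  show "\<And>x x' y. QH m n (x + x') y = QH m n x y + QH m n x' y" by (rule QH_add_l)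
  show "\<And>x y y'. QH m n x (y + y') = QH m n x y + QH m n x y'" by (rule QH_add_r)
  show "\<And>c x y. QH m n (cscale c x) y = c * QH m n x y" by (rule QH_scl_l)
  show "\<And>c x y. QH m n x (cscale c y) = c * QH m n x y" by (rule QH_scl_r)
  show "QH m n u v = 0" if "\<And>i. i \<noteq> Z \<Longrightarrow> v i = 0" for u v :: "idx \<Rightarrow> 'k"
    using that by (simp add: QH_def)
  show "QH m n x y = 0" if x: "x \<in> part (Hmn m n) a" and y: "y \<in> part (Hmn m n) b"
      and ab: "(a \<noteq> b) \<noteq> False" for a b x y
  proof -
    have "(\<Sum>k=1..m. x (X k) * y (X (m + k)) - x (X (m + k)) * y (X k)) = 0"
      using ab Hmn_part[OF x] Hmn_part[OF y] by (cases a) (auto intro!: sum.neutral)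
    moreover have "(\<Sum>j=1..n. x (Y j) * y (Y j)) = 0"
      using ab Hmn_part[OF x] Hmn_part[OF y] by (cases a) (auto intro!: sum.neutral)
    ultimately show ?thesis by (auto simp: QH_def)
  qed
  show "QH m n x y = - (psign (a \<and> b) * QH m n y x)" if x: "x \<in> part (Hmn m n) a" and y: "y \<in> part (Hmn m n) b" for a b x y
  proof (cases "a \<and> b")
    case True
    have "(\<Sum>k=1..m. x (X k) * y (X (m + k)) - x (X (m + k)) * y (X k)) = 0"
      "(\<Sum>k=1..m. y (X k) * x (X (m + k)) - y (X (m + k)) * x (X k)) = 0"
      using True Hmn_part[OF x] Hmn_part[OF y] by (auto intro!: sum.neutral)
    then show ?thesis using True by (simp add: QH_def psign_def mult.commute)
  next
    case False
    have "(\<Sum>j=1..n. x (Y j) * y (Y j)) = 0" "(\<Sum>j=1..n. y (Y j) * x (Y j)) = 0"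
      using False Hmn_part[OF x] Hmn_part[OF y] by (auto intro!: sum.neutral)
    moreover have "(\<Sum>k=1..m. x (X k) * y (X (m + k)) - x (X (m + k)) * y (X k))
        = - (\<Sum>k=1..m. y (X k) * x (X (m + k)) - y (X (m + k)) * x (X k))"
      by (simp add: sum_negf[symmetric] algebra_simps)
    moreover have "psign (a \<and> b) = 1" using False by (auto simp: psign_def)
    ultimately show ?thesis by (auto simp: QH_def)
  qed
qed

lemma Hm_lsa: "lie_superalgebra (Hm m :: ('k::field, idx \<Rightarrow> 'k) lsa)"
proof (rule lsa_central[OF Hm_car Hm_evp Hm_odp _ Hm_scl Hm_brk, where zp = True])
  show "XS m \<inter> (YS m \<union> {Z}) = {}" by (auto simp: XS_def YS_def)
  show "Z \<in> (if True then YS m \<union> {Z} else XS m)" by simp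
  show "\<And>x x' y. QM m (x + x') y = QM m x y + QM m x' y" by (rule QM_add_l)
  show "\<And>x y y'. QM m x (y + y') = QM m x y + QM m x y'" by (rule QM_add_r)
  show "\<And>c x y. QM m (cscale c x) y = c * QM m x y" by (rule QM_scl_l)
  show "\<And>c x y. QM m x (cscale c y) = c * QM m x y" by (rule QM_scl_r)
  show "QM m u v = 0" if "\<And>i. i \<noteq> Z \<Longrightarrow> v i = 0" for u v :: "idx \<Rightarrow> 'k"
    using that by (simp add: QM_def)
  show "QM m x y = 0" if x: "x \<in> part (Hm m) a" and y: "y \<in> part (Hm m) b"
      and ab: "(a \<noteq> b) \<noteq> True" for a b x y
    using ab Hm_part[OF x] Hm_part[OF y] unfolding QM_def by (cases a) (auto intro!: sum.neutral)
  show "QM m x y = - (psign (a \<and> b) * QM m y x)" if x: "x \<in> part (Hm m) a" and y: "y \<in> part (Hm m) b" for a b x y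
  proof (cases "a \<and> b")
    case True
    have "QM m x y = 0" "QM m y x = 0"
      using True Hm_part[OF x] Hm_part[OF y] unfolding QM_def by (auto intro!: sum.neutral)
    then show ?thesis by simp
  next
    case False
    have "QM m x y = - QM m y x" unfolding QM_def by (simp add: sum_negf[symmetric] algebra_simps)
    moreover have "psign (a \<and> b) * QM m y x = QM m y x" using False by (auto simp: psign_def)
    ultimately show ?thesis by simp
  qed
qed


context WF
begin

lemma W_Zl: assumes "\<And>i. i \<noteq> Z \<Longrightarrow> u i = 0" and noZ: "\<And>c d. (c,d) \<in> P \<Longrightarrow> c \<noteq> Z \<and> d \<noteq> Z"
  shows "W u v = 0"
proof (rule ext)
  fix k show "W u v k = 0 k"
  proof (cases "k \<in> B")
    case True
    obtain c d where cd: "pr k = (c, d)" by fastforce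
    then have "c \<noteq> Z" "d \<noteq> Z" using noZ pr_in[OF True] by auto
    then show ?thesis using True cd assms(1) by (simp add: W_alt coef_def)
  qed (simp add: W_alt)
qed

lemma W_Zr: assumes "\<And>i. i \<noteq> Z \<Longrightarrow> v i = 0" and noZ: "\<And>c d. (c,d) \<in> P \<Longrightarrow> c \<noteq> Z \<and> d \<noteq> Z"
  shows "W u v = 0"
proof (rule ext)
  fix k show "W u v k = 0 k"
  proof (cases "k \<in> B")
    case True
    obtain c d where cd: "pr k = (c, d)" by fastforce
    then have "c \<noteq> Z" "d \<noteq> Z" using noZ pr_in[OF True] by auto
    then show ?thesis using True cd assms(1) by (simp add: W_alt coef_def)
  qed (simp add: W_alt)
qed

theorem WF_square_ZF:
  assumes noZ: "\<And>c d. (c,d) \<in> P \<Longrightarrow> c \<noteq> Z \<and> d \<noteq> Z"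
    and brkZ: "\<And>u v i. i \<noteq> Z \<Longrightarrow> brk L u v i = 0"
    and Zh: "\<And>(M::('k, 'm::ab_group_add) lsa) f a b. lie_superalgebra M \<Longrightarrow> ext_pairing L M f \<Longrightarrow>
        a \<in> S \<Longrightarrow> b \<in> S \<Longrightarrow> (a, b) \<notin> P \<Longrightarrow> (b, a) \<notin> P \<Longrightarrow> f (delta a) (delta b) = 0"
  shows "is_ext_square L (Aab r s) TYPE('m)"
proof (rule WF_square)
  have l: "W (brk L u v) y = 0" for u v y by (rule W_Zl[OF brkZ noZ])
  have rr: "W y (brk L u v) = 0" for u v y by (rule W_Zr[OF brkZ noZ])
  show "\<forall>a b. \<forall>x\<in>part L a. \<forall>x'\<in>part L b. \<forall>y\<in>car L.
        W (brk L x x') y = W x (brk L x' y) - cscale (psign (a \<and> b)) (W x' (brk L x y))"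
    by (simp add: l rr cscale_facts)
  show "\<forall>a b c. \<forall>x\<in>part L a. \<forall>y\<in>part L b. \<forall>y'\<in>part L c.
        W x (brk L y y') = cscale (psign (c \<and> (a \<noteq> b))) (W (brk L y' x) y)
                         - cscale (psign (a \<and> b)) (W (brk L y x) y')"
    by (simp add: l rr cscale_facts)
  show "\<forall>a b. \<forall>x\<in>part L a. \<forall>y\<in>part L b. \<forall>x'\<in>car L. \<forall>y'\<in>car L. W (brk L y x) (brk L x' y') = 0"
    by (simp add: l)
qed (fact Zh)

end

lemma zvan:
  fixes L :: "('k::field, idx \<Rightarrow> 'k) lsa" and M :: "('k, 'm::ab_group_add) lsa"
  assumes M: "lie_superalgebra M" and f: "ext_pairing L M f" and L: "lie_superalgebra L"
    and x: "x \<in> part L a" and x': "x' \<in> part L b" and y: "y \<in> car L"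
    and e1: "brk L x' y = 0" and e2: "brk L x y = 0"
  shows "f (brk L x x') y = 0"
proof -
  have Ls: "lsubspace L (car L)" by (rule M_sub[OF L])
  have xc: "x \<in> car L" and x'c: "x' \<in> car L" using x x' M_part_car[OF L] by blast+
  have "f (brk L x x') y = f x (brk L x' y) - scl M (psign (a \<and> b)) (f x' (brk L x y))"
    by (rule ep_rel7[OF f x x' y])
  also have "\<dots> = 0" using B_zero_r[OF M ext_bil[OF f] Ls xc] B_zero_r[OF M ext_bil[OF f] Ls x'c]
    M_scl_zero_r[OF M] by (simp add: e1 e2)
  finally show ?thesis .
qed

lemma anti_van:
  fixes L :: "('k::field, idx \<Rightarrow> 'k) lsa" and M :: "('k, 'm::ab_group_add) lsa"
  assumes M: "lie_superalgebra M" and f: "ext_pairing L M f"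
    and x: "x \<in> part L a" and y: "y \<in> part L b" and z: "f y x = 0"
  shows "f x y = 0"
  using ep_anti[OF f x y] z M_scl_zero_r[OF M] by simp

lemma delta_ne: "delta a b = (if b = a then 1 else 0)" by (simp add: delta_def)

lemma QH_dX: assumes "1 \<le> k" "k \<le> m" shows "QH m n (delta (X k)) v = v (X (m + k))"
proof -
  have "(\<Sum>k'=1..m. delta (X k) (X k') * v (X (m + k')) - delta (X k) (X (m + k')) * v (X k'))
      = (\<Sum>k'=1..m. if k' = k then v (X (m + k')) else 0)"
    using assms by (intro sum.cong refl) (auto simp: delta_def)
  moreover have "(\<Sum>j=1..n. delta (X k) (Y j) * v (Y j)) = 0" by (simp add: delta_def)
  ultimately show ?thesis using assms by (simp add: QH_def)
qed

lemma QH_dXm: assumes "1 \<le> k" "k \<le> m" shows "QH m n (delta (X (m + k))) v = - v (X k)"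
proof -
  have "(\<Sum>k'=1..m. delta (X (m + k)) (X k') * v (X (m + k')) - delta (X (m + k)) (X (m + k')) * v (X k'))
      = (\<Sum>k'=1..m. if k' = k then - v (X k') else 0)"
    using assms by (intro sum.cong refl) (auto simp: delta_def)
  moreover have "(\<Sum>j=1..n. delta (X (m + k)) (Y j) * v (Y j)) = 0" by (simp add: delta_def)
  ultimately show ?thesis using assms by (simp add: QH_def)
qed

lemma QH_dY: assumes "1 \<le> j" "j \<le> n" shows "QH m n (delta (Y j)) v = v (Y j)"
proof -
  have "(\<Sum>k'=1..m. delta (Y j) (X k') * v (X (m + k')) - delta (Y j) (X (m + k')) * v (X k')) = 0"
    by (simp add: delta_def)
  moreover have "(\<Sum>j'=1..n. delta (Y j) (Y j') * v (Y j')) = (\<Sum>j'=1..n. if j' = j then v (Y j') else 0)"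
    by (intro sum.cong refl) (auto simp: delta_def)
  ultimately show ?thesis using assms by (simp add: QH_def)
qed

lemma QM_dX: assumes "1 \<le> j" "j \<le> m" shows "QM m (delta (X j)) v = v (Y j)"
proof -
  have "(\<Sum>j'=1..m. delta (X j) (X j') * v (Y j') - delta (X j) (Y j') * v (X j'))
      = (\<Sum>j'=1..m. if j' = j then v (Y j') else 0)"
    by (intro sum.cong refl) (auto simp: delta_def)
  then show ?thesis using assms by (simp add: QM_def)
qed

lemma QM_dY: assumes "1 \<le> j" "j \<le> m" shows "QM m (delta (Y j)) v = - v (X j)"
proof -
  have "(\<Sum>j'=1..m. delta (Y j) (X j') * v (Y j') - delta (Y j) (Y j') * v (X j'))
      = (\<Sum>j'=1..m. if j' = j then - v (X j') else 0)"
    by (intro sum.cong refl) (auto simp: delta_def)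
  then show ?thesis using assms by (simp add: QM_def)
qed

lemma brk_is_delta: "brk L = (\<lambda>u v i. if i = Z then Q u v else 0) \<Longrightarrow> Q u v = 1 \<Longrightarrow> brk L u v = delta Z"
  by (simp add: fun_eq_iff delta_def)
lemma brk_is_0: "brk L = (\<lambda>u v i. if i = Z then Q u v else 0) \<Longrightarrow> Q u v = 0 \<Longrightarrow> brk L u v = 0"
  by (simp add: fun_eq_iff)

definition TT :: "nat \<Rightarrow> (nat \<times> nat) set" where "TT N = {(i, j). 1 \<le> i \<and> i < j \<and> j \<le> N}"
definition UU :: "nat \<Rightarrow> (nat \<times> nat) set" where "UU N = {(i, j). 1 \<le> i \<and> i \<le> j \<and> j \<le> N}"

lemma TT_fin: "finite (TT N)"
  by (rule finite_subset[of _ "{1..N} \<times> {1..N}"]) (auto simp: TT_def)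
lemma UU_fin: "finite (UU N)"
  by (rule finite_subset[of _ "{1..N} \<times> {1..N}"]) (auto simp: UU_def)

lemma card_TT: "2 * card (TT N) = N * (N - 1)"
proof (induction N)
  case 0
  have "TT 0 = {}" by (auto simp: TT_def)
  then show ?case by simp
next
  case (Suc N)
  have eq: "TT (Suc N) = TT N \<union> (\<lambda>i. (i, Suc N)) ` {1..N}" by (auto simp: TT_def)
  have d: "TT N \<inter> (\<lambda>i. (i, Suc N)) ` {1..N} = {}" by (auto simp: TT_def)
  have c: "card ((\<lambda>i. (i, Suc N)) ` {1..N}) = N" by (simp add: card_image inj_on_def)
  have "card (TT (Suc N)) = card (TT N) + N"
    using card_Un_disjoint[OF TT_fin _ d] c eq by simp
  then show ?case using Suc.IH by (cases N) (simp_all add: algebra_simps)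
qed

lemma card_UU: "2 * card (UU N) = N * (N + 1)"
proof (induction N)
  case 0
  have "UU 0 = {}" by (auto simp: UU_def)
  then show ?case by simp
next
  case (Suc N)
  have eq: "UU (Suc N) = UU N \<union> (\<lambda>i. (i, Suc N)) ` {1..Suc N}" by (auto simp: UU_def)
  have d: "UU N \<inter> (\<lambda>i. (i, Suc N)) ` {1..Suc N} = {}" by (auto simp: UU_def)
  have c: "card ((\<lambda>i. (i, Suc N)) ` {1..Suc N}) = Suc N" by (simp add: card_image inj_on_def)
  have "card (UU (Suc N)) = card (UU N) + Suc N"
    using card_Un_disjoint[OF UU_fin _ d] c eq by simp
  then show ?case using Suc.IH by (simp add: algebra_simps)
qed


fun isY :: "idx \<Rightarrow> bool" where "isY (Y _) = True" | "isY _ = False"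

lemma scl3_zero:
  fixes M :: "('k::field, 'm::ab_group_add) lsa"
  assumes M: "lie_superalgebra M" and k3: "(3::'k) \<noteq> 0" and t: "t \<in> car M" and e: "t + t + t = 0"
  shows "t = 0"
proof -
  have e3: "(3::'k) = 1 + 1 + 1" by simp
  have "scl M (1 + 1 + 1) t = scl M (1 + 1) t + scl M 1 t" by (rule M_scl_add_l[OF M t])
  also have "scl M (1 + 1) t = scl M 1 t + scl M 1 t" by (rule M_scl_add_l[OF M t])
  finally have "scl M (1 + 1 + 1) t = t + t + t" using M_scl_one[OF M t] by simp
  then have "scl M 3 t = 0" using e by (simp only: e3)
  then have "scl M (1/3) (scl M 3 t) = 0" using M_scl_zero_r[OF M] by simp
  then show ?thesis using M_scl_mult[OF M t] M_scl_one[OF M t] k3 by simp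
qed

context
  fixes m n :: nat
begin

abbreviation "HL \<equiv> (Hmn m n :: ('k::field, idx \<Rightarrow> 'k) lsa)"

lemma Hd_X: "1 \<le> k \<Longrightarrow> k \<le> 2 * m \<Longrightarrow> delta (X k) \<in> part (Hmn m n :: ('k::field, idx \<Rightarrow> 'k) lsa) False"
  by (simp add: part_def Hmn_evp delta_supp)
lemma Hd_Y: "1 \<le> k \<Longrightarrow> k \<le> n \<Longrightarrow> delta (Y k) \<in> part (Hmn m n :: ('k::field, idx \<Rightarrow> 'k) lsa) True"
  by (simp add: part_def Hmn_odp delta_supp)
lemma Hd_Z: "delta Z \<in> part (Hmn m n :: ('k::field, idx \<Rightarrow> 'k) lsa) False"
  by (simp add: part_def Hmn_evp delta_supp)

lemma Hmn_zv:
  fixes M :: "('k::field, 'm::ab_group_add) lsa"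
  assumes M: "lie_superalgebra M" and f: "ext_pairing (Hmn m n) M f"
    and x: "x \<in> part (Hmn m n :: ('k, idx \<Rightarrow> 'k) lsa) a" and x': "x' \<in> part (Hmn m n :: ('k, idx \<Rightarrow> 'k) lsa) b"
    and q1: "QH m n x x' = 1" and q2: "QH m n x' (delta c) = 0" and q3: "QH m n x (delta c) = 0"
    and c: "c \<in> XS (2*m) \<union> {Z} \<union> YS n"
  shows "f (delta Z) (delta c) = 0"
proof -
  have "brk (Hmn m n :: ('k, idx \<Rightarrow> 'k) lsa) x x' = delta Z" by (rule brk_is_delta[OF Hmn_brk q1])
  moreover have "f (brk (Hmn m n) x x') (delta c) = 0"
  proof (rule zvan[OF M f Hmn_lsa x x'])
    show "delta c \<in> car (Hmn m n :: ('k, idx \<Rightarrow> 'k) lsa)" using c by (simp add: Hmn_car delta_supp)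
    show "brk (Hmn m n) x' (delta c) = 0" by (rule brk_is_0[OF Hmn_brk q2])
    show "brk (Hmn m n) x (delta c) = 0" by (rule brk_is_0[OF Hmn_brk q3])
  qed
  ultimately show ?thesis by simp
qed

lemma Hmn_zvZ:
  fixes M :: "('k::field, 'm::ab_group_add) lsa"
  assumes M: "lie_superalgebra M" and f: "ext_pairing (Hmn m n :: ('k, idx \<Rightarrow> 'k) lsa) M f"
    and k3: "(3::'k) \<noteq> 0" and mn: "2 \<le> m + n \<or> (m = 0 \<and> n = 1)"
    and c: "c \<in> XS (2*m) \<union> {Z} \<union> YS n"
  shows "f (delta Z) (delta c) = 0"
proof -
  have A: ?thesis if m1: "1 \<le> m" and cX0: "\<And>i. c \<noteq> X i"
  proof -
    have cX: "X i \<noteq> c" for i using cX0 by metis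
    show ?thesis
  proof (rule Hmn_zv[OF M f Hd_X[of 1] Hd_X[of "m+1"]])
    show "QH m n (delta (X 1)) (delta (X (m + 1))) = (1::'k)" using m1 QH_dX[of 1 m n "delta (X (m+1))"] by (simp add: delta_def)
    show "QH m n (delta (X (m + 1))) (delta c) = (0::'k)"
      using m1 QH_dXm[of 1 m n "delta c"] cX by (simp add: delta_def)
    show "QH m n (delta (X 1)) (delta c) = (0::'k)" using m1 QH_dX[of 1 m n "delta c"] cX by (simp add: delta_def)
  qed (use m1 c in auto)
  qed
  have Bc: ?thesis if n1: "1 \<le> n" and cY0: "c \<noteq> Y 1"
  proof -
    have cY: "Y 1 \<noteq> c" using cY0 by metis
    show ?thesis
  proof (rule Hmn_zv[OF M f Hd_Y[of 1] Hd_Y[of 1]])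
    show "QH m n (delta (Y 1)) (delta (Y 1)) = (1::'k)" using n1 QH_dY[of 1 n m "delta (Y 1)"] by (simp add: delta_def)
    show "QH m n (delta (Y 1)) (delta c) = (0::'k)" using n1 QH_dY[of 1 n m "delta c"] cY by (simp add: delta_def)
    then show "QH m n (delta (Y 1)) (delta c) = (0::'k)" .
  qed (use n1 c in auto)
  qed
  show ?thesis
  proof (cases c)
    case Z
    show ?thesis
    proof (cases "1 \<le> m")
      case True then show ?thesis using A Z by simp
    next
      case False then show ?thesis using Bc Z mn by force
    qed
  next
    case (X i)
    then have m1: "1 \<le> m" using c by auto
    show ?thesis
    proof (cases "1 \<le> n")
      case True then show ?thesis using Bc X by simp
    next
      case False
      then have m2: "2 \<le> m" using mn by auto
      define k where "k = (if i = 1 \<or> i = m + 1 then 2 else (1::nat))"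
      have k: "1 \<le> k" "k \<le> m" "i \<noteq> k" "i \<noteq> m + k" "k \<noteq> i" "m + k \<noteq> i" using m2 by (auto simp: k_def)
      show ?thesis
      proof (rule Hmn_zv[OF M f Hd_X[of k] Hd_X[of "m+k"]])
        show "QH m n (delta (X k)) (delta (X (m + k))) = (1::'k)" using k QH_dX[of k m n "delta (X (m+k))"] by (simp add: delta_def)
        show "QH m n (delta (X (m + k))) (delta c) = (0::'k)"
          using k QH_dXm[of k m n "delta c"] X by (simp add: delta_def)
        show "QH m n (delta (X k)) (delta c) = (0::'k)" using k QH_dX[of k m n "delta c"] X by (simp add: delta_def)
      qed (use k c in auto)
    qed
  next
    case (Y j)
    show ?thesis
    proof (cases "1 \<le> m")
      case True then show ?thesis using A Y by simp
    next
      case False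
      have j: "1 \<le> j" "j \<le> n" using c Y by auto
      show ?thesis
      proof (cases "2 \<le> n")
        case True
        define j' where "j' = (if j = 1 then 2 else (1::nat))"
        have j': "1 \<le> j'" "j' \<le> n" "Y j' \<noteq> c" using True j Y by (auto simp: j'_def)
        show ?thesis
        proof (rule Hmn_zv[OF M f Hd_Y[of j'] Hd_Y[of j']])
          show "QH m n (delta (Y j')) (delta (Y j')) = (1::'k)"
            using j' QH_dY[of j' n m "delta (Y j')"] by (simp add: delta_def)
          show "QH m n (delta (Y j')) (delta c) = (0::'k)"
            using j' QH_dY[of j' n m "delta c"] by (simp add: delta_def)
          then show "QH m n (delta (Y j')) (delta c) = (0::'k)" .
        qed (use j' c in auto)
      next
        case False
        then have n1: "n = 1" "j = 1" using j by auto
        let ?y = "delta (Y 1) :: idx \<Rightarrow> 'k" and ?z = "delta Z :: idx \<Rightarrow> 'k"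
        have y: "?y \<in> part (Hmn m n) True" using n1 by (intro Hd_Y) auto
        have z: "?z \<in> part (Hmn m n) False" by (rule Hd_Z)
        have yc: "?y \<in> car (Hmn m n :: ('k, idx \<Rightarrow> 'k) lsa)" and zc: "?z \<in> car (Hmn m n :: ('k, idx \<Rightarrow> 'k) lsa)"
          using y z M_part_car[OF Hmn_lsa] by blast+
        have bz: "brk (Hmn m n :: ('k, idx \<Rightarrow> 'k) lsa) ?y ?y = ?z"
          using brk_is_delta[OF Hmn_brk] n1 QH_dY[of 1 n m ?y] by (simp add: delta_def)
        define t where "t = f ?y ?z"
        have tc: "t \<in> car M" unfolding t_def by (rule ep_car[OF f yc zc])
        have "f (brk (Hmn m n) ?y ?y) ?y = f ?y (brk (Hmn m n) ?y ?y) - scl M (psign (True \<and> True)) (f ?y (brk (Hmn m n) ?y ?y))"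
          by (rule ep_rel7[OF f y y yc])
        then have "f ?z ?y = t - scl M (psign (True \<and> True)) t" unfolding bz t_def .
        then have e1: "f ?z ?y = t + t"
          using M_scl_neg[OF M tc, of 1] M_scl_one[OF M tc] by (simp add: psign_def)
        have "f ?z ?y + scl M (psign (False \<and> True)) (f ?y ?z) = 0" by (rule ep_anti[OF f z y])
        then have e2: "f ?z ?y + t = 0" using M_scl_one[OF M tc] by (simp add: t_def psign_def)
        have "t + t + t = 0" using e1 e2 by simp
        then have "t = 0" by (rule scl3_zero[OF M k3 tc])
        then show ?thesis using e1 Y n1 by simp
      qed
    qed
  qed
qed

end


lemma XS_eq: "XS N = X ` {1..N}" by (auto simp: XS_def)
lemma YS_eq: "YS N = Y ` {1..N}" by (auto simp: YS_def)
lemma XS_fin[simp]: "finite (XS N)" by (simp add: XS_eq)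
lemma YS_fin[simp]: "finite (YS N)" by (simp add: YS_eq)

lemma card_XX: "card ((\<lambda>(i, j). (X i, X j)) ` A) = card A"
  by (rule card_image) (auto simp: inj_on_def)
lemma card_YY: "card ((\<lambda>(i, j). (Y i, Y j)) ` A) = card A"
  by (rule card_image) (auto simp: inj_on_def)
lemma card_XY: "card ((\<lambda>(i, j). (X i, Y j)) ` A) = card A"
  by (rule card_image) (auto simp: inj_on_def)

lemma card_TT': "card (TT N) = N * (N - 1) div 2" using card_TT[of N] by simp
lemma card_UU': "card (UU N) = N * (N + 1) div 2" using card_UU[of N] by simp

lemma mm_arith: "m * (2 * m - Suc 0) = 2 * m ^ 2 - (m::nat)"
  by (simp add: power2_eq_square diff_mult_distrib2 mult.commute mult.left_commute)

theorem Hmn_square: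
  fixes m n :: nat
  assumes k3: "(3::'k::field) \<noteq> 0" and mn: "2 \<le> m + n \<or> (m = 0 \<and> n = 1)"
  shows "is_ext_square (Hmn m n :: ('k, idx \<Rightarrow> 'k) lsa)
           (Aab (2 * m ^ 2 - m + n * (n + 1) div 2) (2 * m * n) :: ('k, idx \<Rightarrow> 'k) lsa) TYPE('m::ab_group_add)"
proof -
  define S where "S = XS (2*m) \<union> {Z} \<union> YS n"
  define PE where "PE = (\<lambda>(i, j). (X i, X j)) ` TT (2*m) \<union> (\<lambda>(i, j). (Y i, Y j)) ` UU n"
  define PO where "PO = (\<lambda>(i, j). (X i, Y j)) ` ({1..2*m} \<times> {1..n})"
  define r where "r = 2 * m ^ 2 - m + n * (n + 1) div 2"
  define s where "s = 2 * m * n"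
  have finPE: "finite PE" unfolding PE_def using TT_fin UU_fin by blast
  have finPO: "finite PO" unfolding PO_def by simp
  have dXY: "(\<lambda>(i, j). (X i, X j)) ` TT (2*m) \<inter> (\<lambda>(i, j). (Y i, Y j)) ` UU n = {}" by auto
  have cE: "card PE = r" unfolding PE_def r_def
    using card_Un_disjoint[OF finite_imageI[OF TT_fin] finite_imageI[OF UU_fin] dXY]
    by (simp add: card_XX card_YY card_TT' card_UU' mm_arith)
  have cO: "card PO = s" unfolding PO_def s_def by (simp add: card_XY card_cartesian_product)
  obtain g where g: "bij_betw g {1..r} PE" using ex_bij_betw_nat_finite_1[OF finPE] cE by metis
  obtain h where h: "bij_betw h {1..s} PO" using ex_bij_betw_nat_finite_1[OF finPO] cO by metis
  have carS: "car (Hmn m n :: ('k, idx \<Rightarrow> 'k) lsa) = supp_in S" by (simp add: Hmn_car S_def)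
  have e1: "{a \<in> S. \<not> isY a} = XS (2*m) \<union> {Z}" by (auto simp: S_def XS_def YS_def)
  have e2: "{a \<in> S. isY a} = YS n" by (auto simp: S_def XS_def YS_def)
  interpret W: WF "Hmn m n :: ('k, idx \<Rightarrow> 'k) lsa" S isY PE PO g h r s
  proof
    show "lie_superalgebra (Hmn m n :: ('k, idx \<Rightarrow> 'k) lsa)" by (rule Hmn_lsa)
    show "car (Hmn m n :: ('k, idx \<Rightarrow> 'k) lsa) = supp_in S" by (rule carS)
    show "finite S" by (simp add: S_def)
    show "evp (Hmn m n :: ('k, idx \<Rightarrow> 'k) lsa) = supp_in {a \<in> S. \<not> isY a}" by (simp add: e1 Hmn_evp)
    show "odp (Hmn m n :: ('k, idx \<Rightarrow> 'k) lsa) = supp_in {a \<in> S. isY a}" by (simp add: e2 Hmn_odp)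
    show "scl (Hmn m n :: ('k, idx \<Rightarrow> 'k) lsa) = cscale" by (rule Hmn_scl)
    show "bij_betw g {1..r} PE" by (rule g)
    show "bij_betw h {1..s} PO" by (rule h)
    show "\<And>a b. (a, b) \<in> PE \<union> PO \<Longrightarrow> a \<in> S \<and> b \<in> S"
      by (auto simp: PE_def PO_def S_def TT_def UU_def)
    show "\<And>a b. (a, b) \<in> PE \<Longrightarrow> isY a = isY b" by (auto simp: PE_def)
    show "\<And>a b. (a, b) \<in> PO \<Longrightarrow> isY a \<noteq> isY b" by (auto simp: PO_def)
    show "\<And>a. (a, a) \<in> PE \<union> PO \<Longrightarrow> isY a" by (auto simp: PE_def PO_def TT_def)
    show "\<And>a b. (a, b) \<in> PE \<union> PO \<Longrightarrow> (b, a) \<in> PE \<union> PO \<Longrightarrow> a = b"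
      by (auto simp: PE_def PO_def TT_def UU_def)
  qed
  have "is_ext_square (Hmn m n :: ('k, idx \<Rightarrow> 'k) lsa) (Aab r s) TYPE('m)"
  proof (rule W.WF_square_ZF)
    show "\<And>c d. (c, d) \<in> PE \<union> PO \<Longrightarrow> c \<noteq> Z \<and> d \<noteq> Z" by (auto simp: PE_def PO_def)
    show "\<And>u v i. i \<noteq> Z \<Longrightarrow> brk (Hmn m n :: ('k, idx \<Rightarrow> 'k) lsa) u v i = 0" by (simp add: Hmn_brk)
    fix M :: "('k, 'm) lsa" and f a b
    assume M: "lie_superalgebra M" and f: "ext_pairing (Hmn m n) M f" and a: "a \<in> S" and b: "b \<in> S"
      and nab: "(a, b) \<notin> PE \<union> PO" and nba: "(b, a) \<notin> PE \<union> PO"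
    show "f (delta a) (delta b) = 0"
    proof (cases "a = Z")
      case True
      then show ?thesis using Hmn_zvZ[OF M f k3 mn] b by (simp add: S_def)
    next
      case aZ: False
      show ?thesis
      proof (cases "b = Z")
        case True
        have "f (delta b) (delta a) = 0" using Hmn_zvZ[OF M f k3 mn] a True by (simp add: S_def)
        then show ?thesis using anti_van[OF M f W.delta_part[OF a] W.delta_part[OF b]] by simp
      next
        case bZ: False
        obtain i where ai: "a = X i" and bi: "b = X i" and i: "1 \<le> i" "i \<le> 2 * m"
        proof (cases a)
          case (X i)
          show ?thesis
          proof (cases b)
            case (X j)
            have "\<not> i < j" using nab \<open>a = X i\<close> X a b by (auto simp: PE_def TT_def S_def image_iff)
            moreover have "\<not> j < i" using nba \<open>a = X i\<close> X a b by (auto simp: PE_def TT_def S_def image_iff)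
            ultimately have "i = j" by simp
            then show ?thesis using that \<open>a = X i\<close> X a by (auto simp: S_def)
          next
            case (Y j)
            have False using nab \<open>a = X i\<close> Y a b by (auto simp: PO_def S_def image_iff)
            then show ?thesis ..
          next
            case Z then show ?thesis using bZ by simp
          qed
        next
          case (Y i)
          show ?thesis
          proof (cases b)
            case (X j)
            have False using nba \<open>a = Y i\<close> X a b by (auto simp: PO_def S_def image_iff)
            then show ?thesis ..
          next
            case (Y j)
            have "\<not> i \<le> j" using nab \<open>a = Y i\<close> Y a b by (auto simp: PE_def UU_def S_def image_iff)
            moreover have "\<not> j \<le> i" using nba \<open>a = Y i\<close> Y a b by (auto simp: PE_def UU_def S_def image_iff)
            ultimately have False by simp
            then show ?thesis ..
          next
            case Z then show ?thesis using bZ by simp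
          qed
        next
          case Z then show ?thesis using aZ by simp
        qed
        have "delta (X i) \<in> evp (Hmn m n :: ('k, idx \<Rightarrow> 'k) lsa)" using i by (simp add: Hmn_evp delta_supp)
        then show ?thesis using ep_diag[OF f] ai bi by simp
      qed
    qed
  qed
  then show ?thesis by (simp add: r_def s_def)
qed


fun notX :: "idx \<Rightarrow> bool" where "notX (X _) = False" | "notX _ = True"

lemma Hm_zvZ:
  fixes M :: "('k::field, 'm::ab_group_add) lsa"
  assumes M: "lie_superalgebra M" and f: "ext_pairing (Hm m :: ('k, idx \<Rightarrow> 'k) lsa) M f"
    and m2: "2 \<le> m" and c: "c \<in> XS m \<union> (YS m \<union> {Z})"
  shows "f (delta Z) (delta c) = 0"
proof -
  obtain k where k: "1 \<le> k" "k \<le> m" "X k \<noteq> c" "Y k \<noteq> c"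
  proof (cases c)
    case (X i) then show ?thesis using that[of "if i = 1 then 2 else 1"] m2 by auto
  next
    case (Y i) then show ?thesis using that[of "if i = 1 then 2 else 1"] m2 by auto
  next
    case Z then show ?thesis using that[of 1] m2 by auto
  qed
  let ?x = "delta (X k) :: idx \<Rightarrow> 'k" and ?x' = "delta (Y k) :: idx \<Rightarrow> 'k"
  have x: "?x \<in> part (Hm m) False" using k by (simp add: part_def Hm_evp delta_supp)
  have x': "?x' \<in> part (Hm m) True" using k by (simp add: part_def Hm_odp delta_supp)
  have q1: "QM m ?x ?x' = 1" using k QM_dX[of k m ?x'] by (simp add: delta_def)
  have q2: "QM m ?x' (delta c) = 0" using k QM_dY[of k m "delta c"] by (simp add: delta_def)
  have q3: "QM m ?x (delta c) = 0" using k QM_dX[of k m "delta c"] by (simp add: delta_def)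
  have "brk (Hm m :: ('k, idx \<Rightarrow> 'k) lsa) ?x ?x' = delta Z" by (rule brk_is_delta[OF Hm_brk q1])
  moreover have "f (brk (Hm m) ?x ?x') (delta c) = 0"
  proof (rule zvan[OF M f Hm_lsa x x'])
    show "delta c \<in> car (Hm m :: ('k, idx \<Rightarrow> 'k) lsa)" using c by (simp add: Hm_car delta_supp)
    show "brk (Hm m) ?x' (delta c) = 0" by (rule brk_is_0[OF Hm_brk q2])
    show "brk (Hm m) ?x (delta c) = 0" by (rule brk_is_0[OF Hm_brk q3])
  qed
  ultimately show ?thesis by simp
qed

lemma card_TU: "card (TT m) + card (UU m) = m ^ 2"
proof -
  have "2 * (card (TT m) + card (UU m)) = m * (m - 1) + m * (m + 1)"
    using card_TT[of m] card_UU[of m] by simp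
  also have "\<dots> = 2 * m ^ 2" by (cases m) (simp_all add: power2_eq_square algebra_simps)
  finally show ?thesis by simp
qed

theorem Hm_square:
  fixes m :: nat
  assumes m2: "2 \<le> m"
  shows "is_ext_square (Hm m :: ('k::field, idx \<Rightarrow> 'k) lsa)
           (Aab (m ^ 2) (m ^ 2) :: ('k, idx \<Rightarrow> 'k) lsa) TYPE('m::ab_group_add)"
proof -
  define S where "S = XS m \<union> (YS m \<union> {Z})"
  define PE where "PE = (\<lambda>(i, j). (X i, X j)) ` TT m \<union> (\<lambda>(i, j). (Y i, Y j)) ` UU m"
  define PO where "PO = (\<lambda>(i, j). (X i, Y j)) ` ({1..m} \<times> {1..m})"
  define r where "r = m ^ 2"
  have finPE: "finite PE" unfolding PE_def using TT_fin UU_fin by blast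
  have finPO: "finite PO" unfolding PO_def by simp
  have dXY: "(\<lambda>(i, j). (X i, X j)) ` TT m \<inter> (\<lambda>(i, j). (Y i, Y j)) ` UU m = {}" by auto
  have cE: "card PE = r" unfolding PE_def r_def
    using card_Un_disjoint[OF finite_imageI[OF TT_fin] finite_imageI[OF UU_fin] dXY]
    by (simp add: card_XX card_YY card_TU)
  have cO: "card PO = r" unfolding PO_def r_def by (simp add: card_XY card_cartesian_product power2_eq_square)
  obtain g where g: "bij_betw g {1..r} PE" using ex_bij_betw_nat_finite_1[OF finPE] cE by metis
  obtain h where h: "bij_betw h {1..r} PO" using ex_bij_betw_nat_finite_1[OF finPO] cO by metis
  have e1: "{a \<in> S. \<not> notX a} = XS m" by (auto simp: S_def XS_def YS_def)
  have e2: "{a \<in> S. notX a} = YS m \<union> {Z}" by (auto simp: S_def XS_def YS_def)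
  interpret W: WF "Hm m :: ('k, idx \<Rightarrow> 'k) lsa" S notX PE PO g h r r
  proof
    show "lie_superalgebra (Hm m :: ('k, idx \<Rightarrow> 'k) lsa)" by (rule Hm_lsa)
    show "car (Hm m :: ('k, idx \<Rightarrow> 'k) lsa) = supp_in S" by (simp add: Hm_car S_def)
    show "finite S" by (simp add: S_def)
    show "evp (Hm m :: ('k, idx \<Rightarrow> 'k) lsa) = supp_in {a \<in> S. \<not> notX a}" by (simp add: e1 Hm_evp)
    show "odp (Hm m :: ('k, idx \<Rightarrow> 'k) lsa) = supp_in {a \<in> S. notX a}" by (simp add: e2 Hm_odp)
    show "scl (Hm m :: ('k, idx \<Rightarrow> 'k) lsa) = cscale" by (rule Hm_scl)
    show "bij_betw g {1..r} PE" by (rule g)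
    show "bij_betw h {1..r} PO" by (rule h)
    show "\<And>a b. (a, b) \<in> PE \<union> PO \<Longrightarrow> a \<in> S \<and> b \<in> S"
      by (auto simp: PE_def PO_def S_def TT_def UU_def)
    show "\<And>a b. (a, b) \<in> PE \<Longrightarrow> notX a = notX b" by (auto simp: PE_def)
    show "\<And>a b. (a, b) \<in> PO \<Longrightarrow> notX a \<noteq> notX b" by (auto simp: PO_def)
    show "\<And>a. (a, a) \<in> PE \<union> PO \<Longrightarrow> notX a" by (auto simp: PE_def PO_def TT_def)
    show "\<And>a b. (a, b) \<in> PE \<union> PO \<Longrightarrow> (b, a) \<in> PE \<union> PO \<Longrightarrow> a = b"
      by (auto simp: PE_def PO_def TT_def UU_def)
  qed
  have "is_ext_square (Hm m :: ('k, idx \<Rightarrow> 'k) lsa) (Aab r r) TYPE('m)"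
  proof (rule W.WF_square_ZF)
    show "\<And>c d. (c, d) \<in> PE \<union> PO \<Longrightarrow> c \<noteq> Z \<and> d \<noteq> Z" by (auto simp: PE_def PO_def)
    show "\<And>u v i. i \<noteq> Z \<Longrightarrow> brk (Hm m :: ('k, idx \<Rightarrow> 'k) lsa) u v i = 0" by (simp add: Hm_brk)
    fix M :: "('k, 'm) lsa" and f a b
    assume M: "lie_superalgebra M" and f: "ext_pairing (Hm m) M f" and a: "a \<in> S" and b: "b \<in> S"
      and nab: "(a, b) \<notin> PE \<union> PO" and nba: "(b, a) \<notin> PE \<union> PO"
    show "f (delta a) (delta b) = 0"
    proof (cases "a = Z")
      case True
      then show ?thesis using Hm_zvZ[OF M f m2] b by (simp add: S_def)
    next
      case aZ: False
      show ?thesis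
      proof (cases "b = Z")
        case True
        have "f (delta b) (delta a) = 0" using Hm_zvZ[OF M f m2] a True by (simp add: S_def)
        then show ?thesis using anti_van[OF M f W.delta_part[OF a] W.delta_part[OF b]] by simp
      next
        case bZ: False
        obtain i where ai: "a = X i" and bi: "b = X i" and i: "1 \<le> i" "i \<le> m"
        proof (cases a)
          case (X i)
          show ?thesis
          proof (cases b)
            case (X j)
            have "\<not> i < j" using nab \<open>a = X i\<close> X a b by (auto simp: PE_def TT_def S_def image_iff)
            moreover have "\<not> j < i" using nba \<open>a = X i\<close> X a b by (auto simp: PE_def TT_def S_def image_iff)
            ultimately have "i = j" by simp
            then show ?thesis using that \<open>a = X i\<close> X a by (auto simp: S_def)
          next
            case (Y j)
            have False using nab \<open>a = X i\<close> Y a b by (auto simp: PO_def S_def image_iff)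
            then show ?thesis ..
          next
            case Z then show ?thesis using bZ by simp
          qed
        next
          case (Y i)
          show ?thesis
          proof (cases b)
            case (X j)
            have False using nba \<open>a = Y i\<close> X a b by (auto simp: PO_def S_def image_iff)
            then show ?thesis ..
          next
            case (Y j)
            have "\<not> i \<le> j" using nab \<open>a = Y i\<close> Y a b by (auto simp: PE_def UU_def S_def image_iff)
            moreover have "\<not> j \<le> i" using nba \<open>a = Y i\<close> Y a b by (auto simp: PE_def UU_def S_def image_iff)
            ultimately have False by simp
            then show ?thesis ..
          next
            case Z then show ?thesis using bZ by simp
          qed
        next
          case Z then show ?thesis using aZ by simp
        qed
        have "delta (X i) \<in> evp (Hm m :: ('k, idx \<Rightarrow> 'k) lsa)" using i by (simp add: Hm_evp delta_supp)
        then show ?thesis using ep_diag[OF f] ai bi by simp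
      qed
    qed
  qed
  then show ?thesis by (simp add: r_def)
qed


context WF
begin

lemma W_lift:
  assumes "\<And>cd. cd \<in> P \<Longrightarrow> coef par cd u1 v1 = c2 * coef par cd u2 v2 - c3 * coef par cd u3 v3"
  shows "W u1 v1 = cscale c2 (W u2 v2) - cscale c3 (W u3 v3)"
proof (rule ext)
  fix k
  show "W u1 v1 k = (cscale c2 (W u2 v2) - cscale c3 (W u3 v3)) k"
  proof (cases "k \<in> B")
    case True then show ?thesis using assms[OF pr_in[OF True]] by (simp add: W_alt)
  qed (simp add: W_alt)
qed

lemma W_lift0:
  assumes "\<And>cd. cd \<in> P \<Longrightarrow> coef par cd u1 v1 = 0"
  shows "W u1 v1 = 0"
proof (rule ext)
  fix k
  show "W u1 v1 k = 0 k"
  proof (cases "k \<in> B")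
    case True then show ?thesis using assms[OF pr_in[OF True]] by (simp add: W_alt)
  qed (simp add: W_alt)
qed

end

lemma QH10: "QH 1 0 u v = u (X 1) * v (X 2) - u (X 2) * v (X 1)" by (simp add: QH_def numeral_2_eq_2)
lemma QM1: "QM 1 u v = u (X 1) * v (Y 1) - u (Y 1) * v (X 1)" by (simp add: QM_def)

lemma H10_odd0: "x \<in> part (Hmn 1 0 :: ('k::field, idx \<Rightarrow> 'k) lsa) True \<Longrightarrow> x = 0"
  by (auto simp: part_def Hmn_odp supp_in_iff fun_eq_iff YS_def)

theorem H10_square:
  shows "is_ext_square (Hmn 1 0 :: ('k::field, idx \<Rightarrow> 'k) lsa) (Aab 3 0 :: ('k, idx \<Rightarrow> 'k) lsa) TYPE('m::ab_group_add)"
proof -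
  let ?L = "Hmn 1 0 :: ('k, idx \<Rightarrow> 'k) lsa"
  define S where "S = XS (2*1) \<union> {Z} \<union> YS 0"
  define PE where "PE = {(X 1, X 2), (X 1, Z), (X 2, Z)}"
  define PO where "PO = ({} :: (idx \<times> idx) set)"
  have cE: "card PE = 3" by (simp add: PE_def)
  obtain g :: "nat \<Rightarrow> idx \<times> idx" where g: "bij_betw g {1..3} PE" using ex_bij_betw_nat_finite_1[of PE] cE by (metis PE_def finite.emptyI finite_insert)
  obtain h :: "nat \<Rightarrow> idx \<times> idx" where h: "bij_betw h {1..0} PO" by (metis PO_def atLeastatMost_empty bij_betwI' empty_iff zero_less_one)
  have S3: "S = {X 1, X 2, Z}" by (auto simp: S_def XS_def YS_def)
  interpret W: WF ?L S isY PE PO g h 3 0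
  proof
    show "lie_superalgebra ?L" by (rule Hmn_lsa)
    show "car ?L = supp_in S" by (simp add: Hmn_car S_def)
    show "finite S" by (simp add: S3)
    have "{a \<in> S. \<not> isY a} = XS (2 * 1) \<union> {Z}" by (auto simp: S_def YS_def XS_def)
    then show "evp ?L = supp_in {a \<in> S. \<not> isY a}" by (simp only: Hmn_evp)
    have "{a \<in> S. isY a} = YS 0" by (auto simp: S3 YS_def)
    then show "odp ?L = supp_in {a \<in> S. isY a}" by (simp only: Hmn_odp)
    show "scl ?L = cscale" by (rule Hmn_scl)
    show "bij_betw g {1..3} PE" by (rule g)
    show "bij_betw h {1..0} PO" by (rule h)
    show "\<And>a b. (a, b) \<in> PE \<union> PO \<Longrightarrow> a \<in> S \<and> b \<in> S" by (auto simp: PE_def PO_def S3)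
    show "\<And>a b. (a, b) \<in> PE \<Longrightarrow> isY a = isY b" by (auto simp: PE_def)
    show "\<And>a b. (a, b) \<in> PO \<Longrightarrow> isY a \<noteq> isY b" by (auto simp: PO_def)
    show "\<And>a. (a, a) \<in> PE \<union> PO \<Longrightarrow> isY a" by (auto simp: PE_def PO_def)
    show "\<And>a b. (a, b) \<in> PE \<union> PO \<Longrightarrow> (b, a) \<in> PE \<union> PO \<Longrightarrow> a = b" by (auto simp: PE_def PO_def)
  qed
  have brkL: "brk ?L u v = (\<lambda>i. if i = Z then u (X 1) * v (X 2) - u (X 2) * v (X 1) else 0)" for u v
    by (simp only: Hmn_brk QH10)
  have brkL': "brk (Hmn (Suc 0) 0 :: ('k, idx \<Rightarrow> 'k) lsa) u v = (\<lambda>i. if i = Z then u (X 1) * v (X 2) - u (X 2) * v (X 1) else 0)" for u v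
    using brkL[of u v] by simp
  show ?thesis
  proof (rule W.WF_square)
    show "\<forall>a b. \<forall>x\<in>part ?L a. \<forall>x'\<in>part ?L b. \<forall>y\<in>car ?L.
        W.W (brk ?L x x') y = W.W x (brk ?L x' y) - cscale (psign (a \<and> b)) (W.W x' (brk ?L x y))"
    proof (intro allI ballI)
      fix a b x x' y assume x: "x \<in> part ?L a" and x': "x' \<in> part ?L b" and y: "y \<in> car ?L"
      show "W.W (brk ?L x x') y = W.W x (brk ?L x' y) - cscale (psign (a \<and> b)) (W.W x' (brk ?L x y))"
      proof (cases "a \<or> b")
        case True
        then have "x = 0 \<or> x' = 0" using H10_odd0 x x' by (cases a; cases b) auto
        then have "W.W (brk ?L x x') y = 0 \<and> W.W x (brk ?L x' y) = 0 \<and> W.W x' (brk ?L x y) = 0"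
          by (auto intro!: W.W_lift0 simp: brkL brkL' coef_def)
        then show ?thesis by (simp add: cscale_facts)
      next
        case False
        then have ps: "psign (a \<and> b) = (1::'k)" by (simp add: psign_def)
        have "W.W (brk ?L x x') y = cscale 1 (W.W x (brk ?L x' y)) - cscale 1 (W.W x' (brk ?L x y))"
          by (rule W.W_lift) (auto simp: PE_def PO_def brkL brkL' coef_def sig_def psign_def algebra_simps)
        then show ?thesis using ps by (simp add: cscale_facts)
      qed
    qed
    show "\<forall>a b c. \<forall>x\<in>part ?L a. \<forall>y\<in>part ?L b. \<forall>y'\<in>part ?L c.
        W.W x (brk ?L y y') = cscale (psign (c \<and> (a \<noteq> b))) (W.W (brk ?L y' x) y)
                         - cscale (psign (a \<and> b)) (W.W (brk ?L y x) y')"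
    proof (intro allI ballI)
      fix a b c x y y' assume x: "x \<in> part ?L a" and y: "y \<in> part ?L b" and y': "y' \<in> part ?L c"
      show "W.W x (brk ?L y y') = cscale (psign (c \<and> (a \<noteq> b))) (W.W (brk ?L y' x) y)
                         - cscale (psign (a \<and> b)) (W.W (brk ?L y x) y')"
      proof (cases "a \<or> b \<or> c")
        case True
        then have "x = 0 \<or> y = 0 \<or> y' = 0" using H10_odd0 x y y' by (cases a; cases b; cases c) auto
        then have "W.W x (brk ?L y y') = 0 \<and> W.W (brk ?L y' x) y = 0 \<and> W.W (brk ?L y x) y' = 0"
          by (auto intro!: W.W_lift0 simp: brkL brkL' coef_def)
        then show ?thesis by (simp add: cscale_facts)
      next
        case False
        then have ps: "psign (a \<and> b) = (1::'k)" "psign (c \<and> (a \<noteq> b)) = (1::'k)" by (simp_all add: psign_def)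
        have "W.W x (brk ?L y y') = cscale 1 (W.W (brk ?L y' x) y) - cscale 1 (W.W (brk ?L y x) y')"
          by (rule W.W_lift) (auto simp: PE_def PO_def brkL brkL' coef_def sig_def psign_def algebra_simps)
        then show ?thesis using ps by simp
      qed
    qed
    show "\<forall>a b. \<forall>x\<in>part ?L a. \<forall>y\<in>part ?L b. \<forall>x'\<in>car ?L. \<forall>y'\<in>car ?L.
        W.W (brk ?L y x) (brk ?L x' y') = 0"
      by (intro allI ballI W.W_lift0) (auto simp: PE_def PO_def brkL brkL' coef_def)
    fix M :: "('k, 'm) lsa" and f a b
    assume M: "lie_superalgebra M" and f: "ext_pairing ?L M f" and a: "a \<in> S" and b: "b \<in> S"
      and nab: "(a, b) \<notin> PE \<union> PO" and nba: "(b, a) \<notin> PE \<union> PO"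
    have "a = b" using a b nab nba by (auto simp: S3 PE_def PO_def)
    moreover have "delta a \<in> evp ?L" using a by (auto simp: S3 Hmn_evp delta_supp)
    ultimately show "f (delta a) (delta b) = 0" using ep_diag[OF f] by simp
  qed
qed


lemma scl2_zero:
  fixes M :: "('k::field, 'm::ab_group_add) lsa"
  assumes M: "lie_superalgebra M" and k2: "(2::'k) \<noteq> 0" and t: "t \<in> car M" and e: "t + t = 0"
  shows "t = 0"
proof -
  have e2: "(2::'k) = 1 + 1" by simp
  have "scl M (1 + 1) t = scl M 1 t + scl M 1 t" by (rule M_scl_add_l[OF M t])
  then have "scl M (1 + 1) t = t + t" using M_scl_one[OF M t] by simp
  then have "scl M 2 t = 0" using e by (simp only: e2)
  then have "scl M (1/2) (scl M 2 t) = 0" using M_scl_zero_r[OF M] by simp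
  then show ?thesis using M_scl_mult[OF M t] M_scl_one[OF M t] k2 by simp
qed

theorem H1_square:
  assumes k2: "(2::'k::field) \<noteq> 0"
  shows "is_ext_square (Hm 1 :: ('k, idx \<Rightarrow> 'k) lsa) (Aab 1 2 :: ('k, idx \<Rightarrow> 'k) lsa) TYPE('m::ab_group_add)"
proof -
  let ?L = "Hm 1 :: ('k, idx \<Rightarrow> 'k) lsa"
  define S where "S = XS 1 \<union> (YS 1 \<union> {Z})"
  define PE where "PE = {(Y 1, Y 1)}"
  define PO where "PO = {(X 1, Y 1), (X 1, Z)}"
  have S3: "S = {X 1, Y 1, Z}" by (auto simp: S_def XS_def YS_def)
  have cE: "card PE = 1" by (simp add: PE_def)
  have cO: "card PO = 2" by (simp add: PO_def)
  obtain g :: "nat \<Rightarrow> idx \<times> idx" where g: "bij_betw g {1..1} PE"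
    using ex_bij_betw_nat_finite_1[of PE] cE by (metis PE_def finite.emptyI finite_insert)
  obtain h :: "nat \<Rightarrow> idx \<times> idx" where h: "bij_betw h {1..2} PO"
    using ex_bij_betw_nat_finite_1[of PO] cO by (metis PO_def finite.emptyI finite_insert)
  interpret W: WF ?L S notX PE PO g h 1 2
  proof
    show "lie_superalgebra ?L" by (rule Hm_lsa)
    show "car ?L = supp_in S" by (simp add: Hm_car S_def)
    show "finite S" by (simp add: S3)
    have "{a \<in> S. \<not> notX a} = XS 1" by (auto simp: S_def YS_def XS_def)
    then show "evp ?L = supp_in {a \<in> S. \<not> notX a}" by (simp only: Hm_evp)
    have "{a \<in> S. notX a} = YS 1 \<union> {Z}" by (auto simp: S_def YS_def XS_def)
    then show "odp ?L = supp_in {a \<in> S. notX a}" by (simp only: Hm_odp)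
    show "scl ?L = cscale" by (rule Hm_scl)
    show "bij_betw g {1..1} PE" by (rule g)
    show "bij_betw h {1..2} PO" by (rule h)
    show "\<And>a b. (a, b) \<in> PE \<union> PO \<Longrightarrow> a \<in> S \<and> b \<in> S" by (auto simp: PE_def PO_def S3)
    show "\<And>a b. (a, b) \<in> PE \<Longrightarrow> notX a = notX b" by (auto simp: PE_def)
    show "\<And>a b. (a, b) \<in> PO \<Longrightarrow> notX a \<noteq> notX b" by (auto simp: PO_def)
    show "\<And>a. (a, a) \<in> PE \<union> PO \<Longrightarrow> notX a" by (auto simp: PE_def PO_def)
    show "\<And>a b. (a, b) \<in> PE \<union> PO \<Longrightarrow> (b, a) \<in> PE \<union> PO \<Longrightarrow> a = b" by (auto simp: PE_def PO_def)
  qed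
  have brkL: "brk ?L u v = (\<lambda>i. if i = Z then u (X 1) * v (Y 1) - u (Y 1) * v (X 1) else 0)" for u v
    by (simp only: Hm_brk QM1)
  have brkL': "brk (Hm (Suc 0) :: ('k, idx \<Rightarrow> 'k) lsa) u v = (\<lambda>i. if i = Z then u (X 1) * v (Y 1) - u (Y 1) * v (X 1) else 0)" for u v
    using brkL[of u v] by simp
  show ?thesis
  proof (rule W.WF_square)
    show "\<forall>a b. \<forall>x\<in>part ?L a. \<forall>x'\<in>part ?L b. \<forall>y\<in>car ?L.
        W.W (brk ?L x x') y = W.W x (brk ?L x' y) - cscale (psign (a \<and> b)) (W.W x' (brk ?L x y))"
    proof (intro allI ballI)
      fix a b x x' y assume x: "x \<in> part ?L a" and x': "x' \<in> part ?L b" and y: "y \<in> car ?L"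
      have "W.W (brk ?L x x') y = cscale 1 (W.W x (brk ?L x' y)) - cscale (psign (a \<and> b)) (W.W x' (brk ?L x y))"
        by (rule W.W_lift) (cases a; cases b; auto simp: PE_def PO_def brkL brkL' coef_def sig_def psign_def
            algebra_simps Hm_part[OF x] Hm_part[OF x'])
      then show "W.W (brk ?L x x') y = W.W x (brk ?L x' y) - cscale (psign (a \<and> b)) (W.W x' (brk ?L x y))"
        by (simp add: cscale_facts)
    qed
    show "\<forall>a b c. \<forall>x\<in>part ?L a. \<forall>y\<in>part ?L b. \<forall>y'\<in>part ?L c.
        W.W x (brk ?L y y') = cscale (psign (c \<and> (a \<noteq> b))) (W.W (brk ?L y' x) y)
                         - cscale (psign (a \<and> b)) (W.W (brk ?L y x) y')"
    proof (intro allI ballI)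
      fix a b c x y y' assume x: "x \<in> part ?L a" and y: "y \<in> part ?L b" and y': "y' \<in> part ?L c"
      show "W.W x (brk ?L y y') = cscale (psign (c \<and> (a \<noteq> b))) (W.W (brk ?L y' x) y)
                         - cscale (psign (a \<and> b)) (W.W (brk ?L y x) y')"
        by (rule W.W_lift) (cases a; cases b; cases c; auto simp: PE_def PO_def brkL brkL' coef_def sig_def psign_def
            algebra_simps Hm_part[OF x] Hm_part[OF y] Hm_part[OF y'])
    qed
    show "\<forall>a b. \<forall>x\<in>part ?L a. \<forall>y\<in>part ?L b. \<forall>x'\<in>car ?L. \<forall>y'\<in>car ?L.
        W.W (brk ?L y x) (brk ?L x' y') = 0"
      by (intro allI ballI W.W_lift0) (auto simp: PE_def PO_def brkL brkL' coef_def)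
    fix M :: "('k, 'm) lsa" and f a b
    assume M: "lie_superalgebra M" and f: "ext_pairing ?L M f" and a: "a \<in> S" and b: "b \<in> S"
      and nab: "(a, b) \<notin> PE \<union> PO" and nba: "(b, a) \<notin> PE \<union> PO"
    let ?x = "delta (X 1) :: idx \<Rightarrow> 'k" and ?y = "delta (Y 1) :: idx \<Rightarrow> 'k" and ?z = "delta Z :: idx \<Rightarrow> 'k"
    have px: "?x \<in> part ?L False" by (simp add: part_def Hm_evp delta_supp)
    have py: "?y \<in> part ?L True" by (simp add: part_def Hm_odp delta_supp)
    have pz: "?z \<in> part ?L True" by (simp add: part_def Hm_odp delta_supp)
    have yc: "?y \<in> car ?L" and zc: "?z \<in> car ?L" and xc: "?x \<in> car ?L"
      using px py pz M_part_car[OF Hm_lsa] by blast+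
    have bxy: "brk ?L ?x ?y = ?z" by (simp add: brkL brkL' delta_def fun_eq_iff)
    have byy: "brk ?L ?y ?y = 0" by (simp add: brkL brkL' delta_def fun_eq_iff)
    have byz: "brk ?L ?y ?z = 0" by (simp add: brkL brkL' delta_def fun_eq_iff)
    have bxz: "brk ?L ?x ?z = 0" by (simp add: brkL brkL' delta_def fun_eq_iff)
    have fzz: "f ?z ?z = 0" using zvan[OF M f Hm_lsa px py zc byz bxz] bxy by simp
    have fzy: "f ?z ?y = 0"
    proof -
      define t where "t = f ?y ?z"
      have tc: "t \<in> car M" unfolding t_def by (rule ep_car[OF f yc zc])
      have "f (brk ?L ?x ?y) ?y = f ?x (brk ?L ?y ?y) - scl M (psign (False \<and> True)) (f ?y (brk ?L ?x ?y))"
        by (rule ep_rel7[OF f px py yc])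
      then have "f ?z ?y = f ?x 0 - scl M (psign (False \<and> True)) t" unfolding bxy byy t_def .
      then have e1: "f ?z ?y = - t"
        using B_zero_r[OF M ext_bil[OF f] M_sub[OF Hm_lsa] xc] M_scl_one[OF M tc]
        by (simp add: psign_def)
      have s1: "scl M (-1) t = - t" using M_scl_neg[OF M tc, of 1] M_scl_one[OF M tc] by simp
      have "f ?z ?y + scl M (psign (True \<and> True)) (f ?y ?z) = 0" by (rule ep_anti[OF f pz py])
      then have "f ?z ?y + scl M (-1) t = 0" by (simp add: t_def psign_def)
      then have "- t + - t = 0" by (simp only: e1 s1)
      then have "t + t = 0" by (metis minus_add_distrib neg_equal_0_iff_equal)
      then have "t = 0" by (rule scl2_zero[OF M k2 tc])
      then show ?thesis using e1 by simp
    qed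
    have cases: "(a = X 1 \<and> b = X 1) \<or> (a = Z \<and> b = Z) \<or> (a = Z \<and> b = Y 1) \<or> (a = Y 1 \<and> b = Z)"
      using a b nab nba by (auto simp: S3 PE_def PO_def)
    show "f (delta a) (delta b) = 0"
    proof -
      { assume "a = X 1 \<and> b = X 1"
        then have ?thesis using ep_diag[OF f] px by (simp add: part_def) }
      moreover { assume "a = Z \<and> b = Z" then have ?thesis using fzz by simp }
      moreover { assume "a = Z \<and> b = Y 1" then have ?thesis using fzy by simp }
      moreover { assume "a = Y 1 \<and> b = Z" then have ?thesis using anti_van[OF M f py pz fzy] by simp }
      ultimately show ?thesis using cases by blast
    qed
  qed
qed


theorem mainTheorem17:
  assumes "(2::'k::field) \<noteq> 0" and "(3::'k) \<noteq> 0"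
  shows "is_ext_square (Hmn 1 0 :: ('k, idx \<Rightarrow> 'k) lsa) (Aab 3 0 :: ('k, idx \<Rightarrow> 'k) lsa) TYPE('m::ab_group_add)
       \<and> is_ext_square (Hmn 0 1 :: ('k, idx \<Rightarrow> 'k) lsa) (Aab 1 0 :: ('k, idx \<Rightarrow> 'k) lsa) TYPE('m)
       \<and> (\<forall>m n. m + n \<ge> 2 \<longrightarrow>
            is_ext_square (Hmn m n :: ('k, idx \<Rightarrow> 'k) lsa)
              (Aab (2 * m ^ 2 - m + n * (n + 1) div 2) (2 * m * n) :: ('k, idx \<Rightarrow> 'k) lsa) TYPE('m))
       \<and> is_ext_square (Hm 1 :: ('k, idx \<Rightarrow> 'k) lsa) (Aab 1 2 :: ('k, idx \<Rightarrow> 'k) lsa) TYPE('m)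
       \<and> (\<forall>m. m \<ge> 2 \<longrightarrow>
            is_ext_square (Hm m :: ('k, idx \<Rightarrow> 'k) lsa) (Aab (m ^ 2) (m ^ 2) :: ('k, idx \<Rightarrow> 'k) lsa) TYPE('m))"
  proof (intro conjI allI impI)
  show "is_ext_square (Hmn 1 0 :: ('k, idx \<Rightarrow> 'k) lsa) (Aab 3 0 :: ('k, idx \<Rightarrow> 'k) lsa) TYPE('m::ab_group_add)"
    by (rule H10_square)
  show "is_ext_square (Hmn 0 1 :: ('k, idx \<Rightarrow> 'k) lsa) (Aab 1 0 :: ('k, idx \<Rightarrow> 'k) lsa) TYPE('m)"
    using Hmn_square[OF assms(2), of 0 1, where 'm='m] by simp
  show "is_ext_square (Hmn m n :: ('k, idx \<Rightarrow> 'k) lsa)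
              (Aab (2 * m ^ 2 - m + n * (n + 1) div 2) (2 * m * n) :: ('k, idx \<Rightarrow> 'k) lsa) TYPE('m)"
    if "m + n \<ge> 2" for m n
    using Hmn_square[OF assms(2), of m n, where 'm='m] that by simp
  show "is_ext_square (Hm 1 :: ('k, idx \<Rightarrow> 'k) lsa) (Aab 1 2 :: ('k, idx \<Rightarrow> 'k) lsa) TYPE('m)"
    by (rule H1_square[OF assms(1)])
  show "is_ext_square (Hm m :: ('k, idx \<Rightarrow> 'k) lsa) (Aab (m ^ 2) (m ^ 2) :: ('k, idx \<Rightarrow> 'k) lsa) TYPE('m)"
    if "m \<ge> 2" for m
    by (rule Hm_square[OF that])
qed

end
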